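(* Let $d\in\mathrm{End}^1(E)$ and $\delta\in\mathrm{End}^{-1}(E)$ with $d^2=\delta^2=0$, and assume $[d,\delta]=d\delta+\delta d$ is invertible, so that $d$ and $\delta$ are exact. Then $$\prod_{i=p}^q\det\big([d,\delta]|_{E^i}\big)^{(-1)^i}=1 ,$$ and the ratio of the nonzero elements $\tau(d),\tau(\delta)$ of the even line $\det E$ is $$\tau(d)\otimes\tau(\delta)^{-1}=\prod_{i=p}^q\det\big([d,\delta]|_{E^i}\big)^{(-1)^i\,i} .$$ In particular, if $[d,\delta]=1$ then $\tau(d)=\tau(\delta)$.
   Context: $E=\bigoplus_{i=p}^qE^i$ is a finite-dimensional complex $\mathbb Z$-graded vector space. Determinant lines follow Knudsen–Mumford: $\det V=\Lambda^{\max}V$ with parity $\dim V$, and $\det E=\bigotimes_{i=p}^q(\det E^i)^{(-1)^i}$ (ordered). When a differential is exact, $\det E$ is even. For an exact degree-$1$ differential $d$, $$\tau(d)=\bigotimes_{i=p}^q(d\sigma^{i-1}\wedge\sigma^i)^{(-1)^i},$$ with $\sigma^i$ a nonzero element of $\Lambda^{\max}$ of a complement of $dE^{i-1}$ in $E^i$ ($\sigma^{p-1}=1$). For an exact degree-$(-1)$ differential $\delta$, $$\tau(\delta)=\bigotimes_{i=p}^q(\rho^i\wedge\delta\rho^{i+1})^{(-1)^i},$$ with $\rho^i$ a nonzero element of $\Lambda^{\max}$ of a complement of $\delta E^{i+1}$ in $E^i$ ($\rho^{q+1}=1$). For odd $i$, inverses of wedge products $a\wedge b$ are read as $a^{-1}_{\mathrm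 r}\wedge b^{-1}_{\mathrm l}$ (right, respectively left, graded inverses). Both sections are nonzero and independent of choices. *)

theory Defs
  imports Complex_Main "Jordan_Normal_Form.Determinant"
begin

(* Graded space E = \<Oplus>_{i=p..q} E^i modelled in coordinates: E^i = complex^(n i),
   with n i = 0 outside {p..q}.  d i : E^i \<rightarrow> E^(i+1) is an (n (i+1)) x (n i) matrix,
   \<delta> i : E^i \<rightarrow> E^(i-1) is an (n (i-1)) x (n i) matrix. *)

definition sgnexp :: "int \<Rightarrow> int" where
  "sgnexp i = (if even i then 1 else -1)"

definition col_range :: "complex mat \<Rightarrow> complex vec set" where
  "col_range A = {A *\<^sub>v u | u. u \<in> carrier_vec (dim_col A)}"

definition is_compl_basis :: "complex mat \<Rightarrow> complex mat \<Rightarrow> nat \<Rightarrow> bool" where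
  "is_compl_basis A B m \<longleftrightarrow> dim_row A = m \<and> dim_row B = m \<and>
     (\<forall>v \<in> carrier_vec m. \<exists>!(w, c). w \<in> col_range A \<and> c \<in> carrier_vec (dim_col B)
                                     \<and> v = w + B *\<^sub>v c)"

(* juxtaposition of the columns of A and B: the matrix whose determinant is the
   coefficient of a \<and> b w.r.t. the standard volume element e_1\<and>...\<and>e_m *)
definition cat_cols :: "nat \<Rightarrow> complex mat \<Rightarrow> complex mat \<Rightarrow> complex mat" where
  "cat_cols m A B = mat_of_cols m (cols A @ cols B)"

(* coordinate of tau(d) = \<Otimes>_i (d\<sigma>^(i-1) \<and> \<sigma>^i)^((-1)^i), where \<sigma>^i is the wedge of the
   columns of B i (up to the overall convention sign, which depends only on the ranks
   and is the same for tau(\<delta>)) *)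
definition tau_d :: "(int \<Rightarrow> nat) \<Rightarrow> (int \<Rightarrow> complex mat) \<Rightarrow> (int \<Rightarrow> complex mat)
                      \<Rightarrow> int \<Rightarrow> int \<Rightarrow> complex" where
  "tau_d n d B p q = (\<Prod>i\<in>{p..q}. det (cat_cols (n i) (d (i-1) * B (i-1)) (B i)) powi sgnexp i)"

(* coordinate of tau(\<delta>) = \<Otimes>_i (\<rho>^i \<and> \<delta>\<rho>^(i+1))^((-1)^i) *)
definition tau_delta :: "(int \<Rightarrow> nat) \<Rightarrow> (int \<Rightarrow> complex mat) \<Rightarrow> (int \<Rightarrow> complex mat)
                      \<Rightarrow> int \<Rightarrow> int \<Rightarrow> complex" where
  "tau_delta n \<delta> R p q = (\<Prod>i\<in>{p..q}. det (cat_cols (n i) (R i) (\<delta> (i+1) * R (i+1))) powi sgnexp i)"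

definition comm_dd :: "(int \<Rightarrow> complex mat) \<Rightarrow> (int \<Rightarrow> complex mat) \<Rightarrow> int \<Rightarrow> complex mat" where
  "comm_dd d \<delta> i = d (i-1) * \<delta> i + \<delta> (i+1) * d i"

end

theory Submission
  imports Defs
begin

definition tr :: "complex mat \<Rightarrow> complex" where
  "tr A = (\<Sum>i<dim_row A. A $$ (i,i))"

lemma tr_comm: assumes A: "A \<in> carrier_mat m k" and B: "B \<in> carrier_mat k m"
  shows "tr (A * B) = tr (B * A)"
proof -
  have "tr (A * B) = (\<Sum>i<m. \<Sum>l<k. A $$ (i,l) * B $$ (l,i))"
    using A B by (simp add: tr_def scalar_prod_def lessThan_atLeast0)
  also have "\<dots> = (\<Sum>l<k. \<Sum>i<m. B $$ (l,i) * A $$ (i,l))"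
    by (subst sum.swap) (simp add: mult.commute)
  also have "\<dots> = tr (B * A)"
    using A B by (simp add: tr_def scalar_prod_def lessThan_atLeast0)
  finally show ?thesis .
qed

lemma tr_one: "tr (1\<^sub>m m) = of_nat m"
  by (simp add: tr_def)

lemma mult_unit_vec_col: fixes M :: "complex mat" assumes M: "M \<in> carrier_mat m k" and j: "j < k"
  shows "M *\<^sub>v unit_vec k j = col M j"
proof (rule eq_vecI)
  fix i assume "i < dim_vec (col M j)"
  hence i: "i < m" using M by simp
  have "(M *\<^sub>v unit_vec k j) $ i = row M i \<bullet> unit_vec k j" using M i by simp
  also have "\<dots> = row M i $ j" by (rule scalar_prod_right_unit[OF j])
  finally show "(M *\<^sub>v unit_vec k j) $ i = col M j $ i" using M i j by simp
qed (use M in simp)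

lemma square_of_bij:
  fixes M :: "complex mat"
  assumes M: "M \<in> carrier_mat m k"
    and surj: "\<And>v. v \<in> carrier_vec m \<Longrightarrow> \<exists>c\<in>carrier_vec k. M *\<^sub>v c = v"
    and inj: "\<And>c. c \<in> carrier_vec k \<Longrightarrow> M *\<^sub>v c = 0\<^sub>v m \<Longrightarrow> c = 0\<^sub>v k"
  shows "k = m"
proof -
  define f where "f j = (SOME c. c \<in> carrier_vec k \<and> M *\<^sub>v c = unit_vec m j)" for j
  have f: "f j \<in> carrier_vec k \<and> M *\<^sub>v f j = unit_vec m j" for j
    unfolding f_def by (rule someI_ex, use surj[of "unit_vec m j"] in auto)
  define N where "N = mat_of_cols k (map f [0..<m])"
  have N: "N \<in> carrier_mat k m" unfolding N_def by auto
  have colN: "j < m \<Longrightarrow> col N j = f j" for j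
    unfolding N_def using f by (subst col_mat_of_cols) auto
  have MN: "M * N = 1\<^sub>m m"
  proof (rule mat_col_eqI)
    fix j assume "j < dim_col (1\<^sub>m m :: complex mat)"
    hence j: "j < m" by simp
    show "col (M * N) j = col (1\<^sub>m m) j"
      using col_mult2[OF M N j] colN[OF j] f[of j] j by simp
  qed (insert M N, auto)
  have NM: "N * M = 1\<^sub>m k"
  proof (rule mat_col_eqI)
    fix j assume "j < dim_col (1\<^sub>m k :: complex mat)"
    hence j: "j < k" by simp
    have cM: "col M j \<in> carrier_vec m" using M j by auto
    have "M *\<^sub>v (N *\<^sub>v col M j - unit_vec k j) = M *\<^sub>v (N *\<^sub>v col M j) - M *\<^sub>v unit_vec k j"
      by (rule mult_minus_distrib_mat_vec[OF M], insert N cM, auto)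
    also have "M *\<^sub>v (N *\<^sub>v col M j) = (M * N) *\<^sub>v col M j"
      using M N cM by simp
    also have "\<dots> = col M j" unfolding MN using cM by simp
    also have "M *\<^sub>v unit_vec k j = col M j" by (rule mult_unit_vec_col[OF M j])
    finally have "M *\<^sub>v (N *\<^sub>v col M j - unit_vec k j) = 0\<^sub>v m" using cM by simp
    from inj[OF _ this] N cM have "N *\<^sub>v col M j - unit_vec k j = 0\<^sub>v k" by auto
    hence eq0: "N *\<^sub>v col M j - unit_vec k j = 0\<^sub>v k" .
    have "N *\<^sub>v col M j = unit_vec k j"
    proof (rule eq_vecI)
      fix i assume "i < dim_vec (unit_vec k j)"
      hence i: "i < k" by simp
      have "(N *\<^sub>v col M j - unit_vec k j) $ i = 0" unfolding eq0 using i by simp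
      thus "(N *\<^sub>v col M j) $ i = unit_vec k j $ i" using N i by simp
    qed (use N in simp)
    thus "col (N * M) j = col (1\<^sub>m k) j" using col_mult2[OF N M j] j by simp
  qed (insert M N, auto)
  have "(of_nat m :: complex) = of_nat k"
    using tr_comm[OF M N] unfolding MN NM tr_one .
  thus ?thesis by simp
qed

lemma zero_rows_mat: "X \<in> carrier_mat 0 c \<Longrightarrow> X = 0\<^sub>m 0 c"
  by (rule eq_matI, auto)

lemma cat_cols_fb:
  assumes A: "A \<in> carrier_mat m a" and B: "B \<in> carrier_mat m b"
  shows "cat_cols m A B = four_block_mat A B (0\<^sub>m 0 a) (0\<^sub>m 0 b)"
proof (rule eq_matI)
  fix i j assume i: "i < dim_row (four_block_mat A B (0\<^sub>m 0 a) (0\<^sub>m 0 b))"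
    and j: "j < dim_col (four_block_mat A B (0\<^sub>m 0 a) (0\<^sub>m 0 b))"
  hence i: "i < m" and j: "j < a + b" using A B by auto
  show "cat_cols m A B $$ (i, j) = four_block_mat A B (0\<^sub>m 0 a) (0\<^sub>m 0 b) $$ (i, j)"
    unfolding cat_cols_def using A B i j
    by (subst mat_of_cols_index) (auto simp: nth_append)
qed (use A B in \<open>auto simp: cat_cols_def\<close>)

lemma cat_cols_carrier[simp]:
  "A \<in> carrier_mat m a \<Longrightarrow> B \<in> carrier_mat m b \<Longrightarrow> cat_cols m A B \<in> carrier_mat m (a + b)"
  unfolding cat_cols_def by auto

lemma append_vec_nil: "w \<in> carrier_vec 0 \<Longrightarrow> v @\<^sub>v w = v"
  by (rule eq_vecI, auto)

lemma cat_mult_vec: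
  assumes A: "A \<in> carrier_mat m a" and B: "B \<in> carrier_mat m b"
    and x: "x \<in> carrier_vec a" and y: "y \<in> carrier_vec b"
  shows "cat_cols m A B *\<^sub>v (x @\<^sub>v y) = A *\<^sub>v x + B *\<^sub>v y"
proof -
  have z1: "0\<^sub>m 0 a \<in> carrier_mat 0 a" and z2: "0\<^sub>m 0 b \<in> carrier_mat 0 b" by auto
  have "cat_cols m A B *\<^sub>v (x @\<^sub>v y) = (A *\<^sub>v x + B *\<^sub>v y) @\<^sub>v (0\<^sub>m 0 a *\<^sub>v x + 0\<^sub>m 0 b *\<^sub>v y)"
    unfolding cat_cols_fb[OF A B] by (rule four_block_mat_mult_vec[OF A B z1 z2 x y])
  also have "\<dots> = A *\<^sub>v x + B *\<^sub>v y"
    by (rule append_vec_nil, rule add_carrier_vec; rule mult_mat_vec_carrier[OF z1 x] mult_mat_vec_carrier[OF z2 y])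
  finally show ?thesis .
qed

lemma cat_mult_four:
  assumes A: "A \<in> carrier_mat m a" and B: "B \<in> carrier_mat m b"
    and c2: "A2 \<in> carrier_mat a nc1" "B2 \<in> carrier_mat a nc2" "C2 \<in> carrier_mat b nc1" "D2 \<in> carrier_mat b nc2"
  shows "cat_cols m A B * four_block_mat A2 B2 C2 D2 = cat_cols m (A * A2 + B * C2) (A * B2 + B * D2)"
proof -
  have "cat_cols m A B * four_block_mat A2 B2 C2 D2 =
     four_block_mat (A * A2 + B * C2) (A * B2 + B * D2)
    (0\<^sub>m 0 a * A2 + 0\<^sub>m 0 b * C2) (0\<^sub>m 0 a * B2 + 0\<^sub>m 0 b * D2)"
    unfolding cat_cols_fb[OF A B]
    by (rule mult_four_block_mat[OF A B _ _ c2], auto)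
  also have "\<dots> = four_block_mat (A * A2 + B * C2) (A * B2 + B * D2) (0\<^sub>m 0 nc1) (0\<^sub>m 0 nc2)"
    by (subst zero_rows_mat[of "0\<^sub>m 0 a * A2 + 0\<^sub>m 0 b * C2" nc1],
        use c2 in force, subst zero_rows_mat[of "0\<^sub>m 0 a * B2 + 0\<^sub>m 0 b * D2" nc2], use c2 in force, rule refl)
  also have "\<dots> = cat_cols m (A * A2 + B * C2) (A * B2 + B * D2)"
    by (rule cat_cols_fb[symmetric], use A B c2 in auto)
  finally show ?thesis .
qed

lemma det_nz_of_inj:
  fixes M :: "complex mat"
  assumes M: "M \<in> carrier_mat m m"
    and inj: "\<And>c. c \<in> carrier_vec m \<Longrightarrow> M *\<^sub>v c = 0\<^sub>v m \<Longrightarrow> c = 0\<^sub>v m"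
  shows "det M \<noteq> 0"
  using det_0_iff_vec_prod_zero_field[OF M] inj by auto

lemma det_0x0: "A \<in> carrier_mat 0 0 \<Longrightarrow> det A = 1"
proof -
  assume "A \<in> carrier_mat 0 0"
  hence "A = 1\<^sub>m 0" by (intro eq_matI, auto)
  thus ?thesis by simp
qed

lemma mat_decomp1:
  fixes X C :: "complex mat"
  assumes X: "X \<in> carrier_mat m a" and C: "C \<in> carrier_mat m c"
    and h: "\<And>j. j < c \<Longrightarrow> \<exists>u\<in>carrier_vec a. col C j = X *\<^sub>v u"
  shows "\<exists>U\<in>carrier_mat a c. C = X * U"
proof -
  define f where "f j = (SOME u. u \<in> carrier_vec a \<and> col C j = X *\<^sub>v u)" for j
  have f: "j < c \<Longrightarrow> f j \<in> carrier_vec a \<and> col C j = X *\<^sub>v f j" for j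
    unfolding f_def by (rule someI_ex, use h[of j] in auto)
  define U where "U = mat_of_cols a (map f [0..<c])"
  have U: "U \<in> carrier_mat a c" unfolding U_def by auto
  have "C = X * U"
  proof (rule mat_col_eqI)
    fix j assume "j < dim_col (X * U)"
    hence j: "j < c" using U by simp
    have "col U j = f j" unfolding U_def using f j by (subst col_mat_of_cols) auto
    thus "col C j = col (X * U) j" using col_mult2[OF X U j] f[OF j] by simp
  qed (use X C U in auto)
  thus ?thesis using U by blast
qed

lemma cat_cols_zero_right:
  assumes B: "B \<in> carrier_mat m 0" and A: "A \<in> carrier_mat m c"
  shows "cat_cols m A B = A"
proof -
  have "cols B = []" using B by (simp add: cols_def)
  hence "cat_cols m A B = mat_of_cols (dim_row A) (cols A)" using A by (simp add: cat_cols_def)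
  thus ?thesis by simp
qed

lemma mat_decomp2:
  fixes X Y C :: "complex mat"
  assumes X: "X \<in> carrier_mat m a" and Y: "Y \<in> carrier_mat m b" and C: "C \<in> carrier_mat m c"
    and h: "\<And>j. j < c \<Longrightarrow> \<exists>u\<in>carrier_vec a. \<exists>w\<in>carrier_vec b. col C j = X *\<^sub>v u + Y *\<^sub>v w"
  shows "\<exists>U\<in>carrier_mat a c. \<exists>W\<in>carrier_mat b c. C = X * U + Y * W"
proof -
  have "\<exists>V\<in>carrier_mat (a+b) c. C = cat_cols m X Y * V"
  proof (rule mat_decomp1[OF _ C])
    show "cat_cols m X Y \<in> carrier_mat m (a + b)" using X Y by simp
    fix j assume "j < c"
    then obtain u w where u: "u \<in> carrier_vec a" and w: "w \<in> carrier_vec b"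
      and e: "col C j = X *\<^sub>v u + Y *\<^sub>v w" using h by blast
    show "\<exists>v\<in>carrier_vec (a + b). col C j = cat_cols m X Y *\<^sub>v v"
      by (rule bexI[of _ "u @\<^sub>v w"], use cat_mult_vec[OF X Y u w] e u w in auto)
  qed
  then obtain V where V: "V \<in> carrier_mat (a+b) c" and CV: "C = cat_cols m X Y * V" by blast
  obtain U W Z1 Z2 where sb: "split_block V a c = (U, Z1, W, Z2)" by (cases "split_block V a c") auto
  have dims: "dim_row V = a + b" "dim_col V = c + 0" using V by auto
  note sp = split_block[OF sb dims]
  have U: "U \<in> carrier_mat a c" and W: "W \<in> carrier_mat b c" and Z1: "Z1 \<in> carrier_mat a 0"
    and Z2: "Z2 \<in> carrier_mat b 0" and VV: "V = four_block_mat U Z1 W Z2" using sp by auto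
  have "C = cat_cols m (X * U + Y * W) (X * Z1 + Y * Z2)"
    unfolding CV VV by (rule cat_mult_four[OF X Y U Z1 W Z2])
  also have "\<dots> = X * U + Y * W"
  proof -
    have "X * Z1 + Y * Z2 \<in> carrier_mat m 0" using X Y Z1 Z2 by auto
    moreover have "X * U + Y * W \<in> carrier_mat m c" using X Y U W by auto
    ultimately show ?thesis by (intro cat_cols_zero_right)
  qed
  finally have "C = X * U + Y * W" .
  thus ?thesis using U W by auto
qed

lemma inj_cancel:
  fixes X A A' :: "complex mat"
  assumes X: "X \<in> carrier_mat m a" and A: "A \<in> carrier_mat a c" and A': "A' \<in> carrier_mat a c"
    and inj: "\<And>v. v \<in> carrier_vec a \<Longrightarrow> X *\<^sub>v v = 0\<^sub>v m \<Longrightarrow> v = 0\<^sub>v a"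
    and eq: "X * A = X * A'"
  shows "A = A'"
proof (rule mat_col_eqI)
  fix j assume "j < dim_col A'"
  hence j: "j < c" using A' by simp
  have cA: "col A j \<in> carrier_vec a" "col A' j \<in> carrier_vec a" using A A' j by auto
  have "X *\<^sub>v (col A j - col A' j) = X *\<^sub>v col A j - X *\<^sub>v col A' j"
    by (rule mult_minus_distrib_mat_vec[OF X cA])
  also have "X *\<^sub>v col A j = X *\<^sub>v col A' j"
    using col_mult2[OF X A j] col_mult2[OF X A' j] eq by simp
  also have "X *\<^sub>v col A' j - X *\<^sub>v col A' j = 0\<^sub>v m"
    by (rule minus_cancel_vec, use X cA in auto)
  finally have z0: "X *\<^sub>v (col A j - col A' j) = 0\<^sub>v m" .
  have cd: "col A j - col A' j \<in> carrier_vec a" using cA by simp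
  have z: "col A j - col A' j = 0\<^sub>v a" by (rule inj[OF cd z0])
  show "col A j = col A' j"
  proof (rule eq_vecI)
    fix i assume "i < dim_vec (col A' j)"
    hence i: "i < a" using A' by simp
    have "(col A j - col A' j) $ i = 0" unfolding z using i by simp
    moreover have "(col A j - col A' j) $ i = col A j $ i - col A' j $ i"
      using cA i by (metis carrier_vecD index_minus_vec(1))
    ultimately show "col A j $ i = col A' j $ i" using cA i by simp
  qed (insert A A', simp)
qed (insert A A', simp_all)

lemma sgnexp_succ: "sgnexp (i + 1) = - sgnexp i"
  by (simp add: sgnexp_def)

lemma sgnexp_pred: "sgnexp (i - 1) = - sgnexp i"
  by (simp add: sgnexp_def)

lemma TL:
  fixes f :: "int \<Rightarrow> complex"
  shows "q + 1 = p + int k \<Longrightarrow> (\<Prod>i\<in>{p..q}. f (i+1)) * f p = f (q+1) * (\<Prod>i\<in>{p..q}. f i)"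
proof (induction k arbitrary: q)
  case 0
  then show ?case by simp
next
  case (Suc k)
  have IH: "(\<Prod>i\<in>{p..q-1}. f (i+1)) * f p = f q * (\<Prod>i\<in>{p..q-1}. f i)"
    using Suc.IH[of "q-1"] Suc.prems by simp
  have s: "{p..q} = insert q {p..q-1}" using Suc.prems by auto
  have "(\<Prod>i\<in>{p..q}. f (i+1)) * f p = f (q+1) * ((\<Prod>i\<in>{p..q-1}. f (i+1)) * f p)"
    unfolding s by (subst prod.insert) auto
  also have "\<dots> = f (q+1) * (\<Prod>i\<in>{p..q}. f i)"
    unfolding IH s by (subst prod.insert) auto
  finally show ?case .
qed

lemma shift_eq:
  fixes f :: "int \<Rightarrow> complex"
  assumes "f p = f (q+1)" "f p \<noteq> 0"
  shows "(\<Prod>i\<in>{p..q}. f (i+1)) = (\<Prod>i\<in>{p..q}. f i)"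
proof (cases "p \<le> q + 1")
  case True
  then obtain k where "q + 1 = p + int k" by (metis zle_iff_zadd)
  from TL[OF this, of f] assms show ?thesis by simp
qed simp

lemma final_algebra:
  fixes b c e gd ge H :: "int \<Rightarrow> complex"
  assumes gd: "\<And>i. gd i * b (i-1) = 1" and ge: "\<And>i. ge i * c i = 1"
    and H: "\<And>i. H i = gd i * ge i * (ge (i+1) * gd (i+1))"
    and e: "\<And>i. e i \<noteq> 0"
    and b1: "b (p-1) = 1" "b q = 1" and c1: "c p = 1" "c (q+1) = 1"
  shows "(\<Prod>i\<in>{p..q}. H i powi sgnexp i) = 1"
    and "(\<Prod>i\<in>{p..q}. (e i * b i) powi sgnexp i) / (\<Prod>i\<in>{p..q}. (e i * c i) powi sgnexp i)
         = (\<Prod>i\<in>{p..q}. H i powi (sgnexp i * i))"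
proof -
  define s where "s = sgnexp"
  define g where "g i = gd i * ge i" for i
  have bnz: "b i \<noteq> 0" for i using gd[of "i+1"] by auto
  have cnz: "c i \<noteq> 0" for i using ge[of i] by auto
  have gdnz: "gd i \<noteq> 0" for i using gd[of i] by auto
  have genz: "ge i \<noteq> 0" for i using ge[of i] by auto
  have gnz: "g i \<noteq> 0" for i using gdnz genz by (simp add: g_def)
  have Hg: "H i = g i * g (i+1)" for i using H[of i] by (simp add: g_def)
  have sS: "s (i+1) = - s i" for i by (simp add: s_def sgnexp_succ)
  define F where "F i = g i powi s i" for i
  define K where "K i = g i powi (s i * i)" for i
  define \<psi> where "\<psi> i = b (i-1) powi s (i-1)" for i
  have gp: "g p = 1"
  proof -
    have "gd p = 1" using gd[of p] b1 by simp
    moreover have "ge p = 1" using ge[of p] c1 by simp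
    ultimately show ?thesis by (simp add: g_def)
  qed
  have gq: "g (q+1) = 1"
  proof -
    have "gd (q+1) = 1" using gd[of "q+1"] b1 by simp
    moreover have "ge (q+1) = 1" using ge[of "q+1"] c1 by simp
    ultimately show ?thesis by (simp add: g_def)
  qed
  have Fnz: "F i \<noteq> 0" for i using gnz by (simp add: F_def power_int_not_zero)
  have Knz: "K i \<noteq> 0" for i using gnz by (simp add: K_def power_int_not_zero)
  have F_shift: "(\<Prod>i\<in>{p..q}. F (i+1)) = (\<Prod>i\<in>{p..q}. F i)"
    by (rule shift_eq) (use gp gq Fnz in \<open>auto simp: F_def\<close>)
  have K_shift: "(\<Prod>i\<in>{p..q}. K (i+1)) = (\<Prod>i\<in>{p..q}. K i)"
    by (rule shift_eq) (use gp gq Knz in \<open>auto simp: K_def\<close>)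
  have psi_shift: "(\<Prod>i\<in>{p..q}. \<psi> (i+1)) = (\<Prod>i\<in>{p..q}. \<psi> i)"
    by (rule shift_eq) (use b1 bnz in \<open>auto simp: \<psi>_def power_int_not_zero\<close>)
  have prodF_nz: "(\<Prod>i\<in>{p..q}. F i) \<noteq> 0" using Fnz by (simp add: prod_zero_iff)
  have prodK_nz: "(\<Prod>i\<in>{p..q}. K i) \<noteq> 0" using Knz by (simp add: prod_zero_iff)
  have step1: "H i powi s i * F (i+1) = F i" for i
  proof -
    have "H i powi s i * F (i+1) = g i powi s i * (g (i+1) powi s i * g (i+1) powi (- s i))"
      unfolding Hg F_def sS by (simp add: power_int_mult_distrib mult.assoc)
    also have "g (i+1) powi s i * g (i+1) powi (- s i) = 1"
      using gnz[of "i+1"] by (simp add: power_int_minus)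
    finally show ?thesis by (simp add: F_def)
  qed
  have "(\<Prod>i\<in>{p..q}. H i powi s i) * (\<Prod>i\<in>{p..q}. F (i+1)) = (\<Prod>i\<in>{p..q}. F i)"
    by (simp add: prod.distrib[symmetric] step1)
  hence "(\<Prod>i\<in>{p..q}. H i powi s i) * (\<Prod>i\<in>{p..q}. F i) = 1 * (\<Prod>i\<in>{p..q}. F i)"
    unfolding F_shift by simp
  thus "(\<Prod>i\<in>{p..q}. H i powi sgnexp i) = 1"
    using prodF_nz unfolding s_def by (metis mult_right_cancel)
  have step2: "H i powi (s i * i) * K (i+1) = K i * F (i+1)" for i
  proof -
    have e1: "s (i+1) * (i+1) = - (s i * i) + (- s i)" using sS[of i] by (simp add: algebra_simps)
    have "K (i+1) = g (i+1) powi (- (s i * i)) * g (i+1) powi (- s i)"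
      unfolding K_def e1 using gnz[of "i+1"] by (rule power_int_add[of "g (i+1)" "- (s i * i)" "- s i", OF disjI1])
    moreover have "F (i+1) = g (i+1) powi (- s i)" unfolding F_def sS ..
    ultimately have "H i powi (s i * i) * K (i+1) = K i * F (i+1) * (g (i+1) powi (s i * i) * g (i+1) powi (- (s i * i)))"
      unfolding Hg K_def by (simp add: power_int_mult_distrib algebra_simps)
    also have "g (i+1) powi (s i * i) * g (i+1) powi (- (s i * i)) = 1"
      using gnz[of "i+1"] by (simp add: power_int_minus)
    finally show ?thesis by simp
  qed
  have "(\<Prod>i\<in>{p..q}. H i powi (s i * i)) * (\<Prod>i\<in>{p..q}. K (i+1)) = (\<Prod>i\<in>{p..q}. K i) * (\<Prod>i\<in>{p..q}. F (i+1))"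
    by (simp add: prod.distrib[symmetric] step2)
  hence "(\<Prod>i\<in>{p..q}. H i powi (s i * i)) * (\<Prod>i\<in>{p..q}. K i) = (\<Prod>i\<in>{p..q}. F i) * (\<Prod>i\<in>{p..q}. K i)"
    unfolding K_shift F_shift by (simp add: mult.commute)
  hence R: "(\<Prod>i\<in>{p..q}. H i powi (s i * i)) = (\<Prod>i\<in>{p..q}. F i)"
    using prodK_nz by (metis mult_right_cancel)
  have step3: "F i * c i powi s i = \<psi> i" for i
  proof -
    have "F i = (gd i * b (i-1)) powi s i * b (i-1) powi (- s i) * ((ge i * c i) powi s i * c i powi (- s i))"
      unfolding F_def g_def using bnz[of "i-1"] cnz[of i]
      by (simp add: power_int_mult_distrib power_int_minus algebra_simps)
    hence "F i = b (i-1) powi (- s i) * c i powi (- s i)" using gd[of i] ge[of i] by simp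
    moreover have "s (i-1) = - s i" by (simp add: s_def sgnexp_pred)
    ultimately show ?thesis unfolding \<psi>_def using cnz[of i] by (simp add: power_int_minus)
  qed
  have psi_b: "\<psi> (i+1) = b i powi s i" for i by (simp add: \<psi>_def)
  have "(\<Prod>i\<in>{p..q}. F i) * (\<Prod>i\<in>{p..q}. c i powi s i) = (\<Prod>i\<in>{p..q}. b i powi s i)"
    unfolding prod.distrib[symmetric] step3 psi_shift[symmetric] psi_b ..
  moreover have cprod_nz: "(\<Prod>i\<in>{p..q}. c i powi s i) \<noteq> 0"
    using cnz by (simp add: prod_zero_iff power_int_not_zero)
  moreover have eprod_nz: "(\<Prod>i\<in>{p..q}. e i powi s i) \<noteq> 0"
    using e by (simp add: prod_zero_iff power_int_not_zero)
  ultimately have "(\<Prod>i\<in>{p..q}. (e i * b i) powi s i) / (\<Prod>i\<in>{p..q}. (e i * c i) powi s i) = (\<Prod>i\<in>{p..q}. F i)"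
    by (simp add: power_int_mult_distrib prod.distrib field_simps)
  thus "(\<Prod>i\<in>{p..q}. (e i * b i) powi sgnexp i) / (\<Prod>i\<in>{p..q}. (e i * c i) powi sgnexp i)
         = (\<Prod>i\<in>{p..q}. H i powi (sgnexp i * i))"
    using R unfolding s_def by simp
qed

lemma zero_mat_mult_vec[simp]: "x \<in> carrier_vec nc \<Longrightarrow> 0\<^sub>m nr nc *\<^sub>v x = (0\<^sub>v nr :: complex vec)"
  by (intro eq_vecI) (auto simp: scalar_prod_def)

lemma mat_mult_zero_vec[simp]: "M \<in> carrier_mat nr nc \<Longrightarrow> M *\<^sub>v 0\<^sub>v nc = (0\<^sub>v nr :: complex vec)"
  by (intro eq_vecI) (auto simp: scalar_prod_def)

locale cx =
  fixes n :: "int \<Rightarrow> nat" and p q :: int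
    and d \<delta> :: "int \<Rightarrow> complex mat"
    and B R :: "int \<Rightarrow> complex mat"
  assumes n_out: "\<And>i. i \<notin> {p..q} \<Longrightarrow> n i = 0"
    and d_dim: "\<And>i. d i \<in> carrier_mat (n (i+1)) (n i)"
    and \<delta>_dim: "\<And>i. \<delta> i \<in> carrier_mat (n (i-1)) (n i)"
    and dd: "\<And>i. d (i+1) * d i = 0\<^sub>m (n (i+2)) (n i)"
    and \<delta>\<delta>: "\<And>i. \<delta> (i-1) * \<delta> i = 0\<^sub>m (n (i-2)) (n i)"
    and inv: "\<And>i. det (comm_dd d \<delta> i) \<noteq> 0"
    and B: "\<And>i. is_compl_basis (d (i-1)) (B i) (n i)"
    and R: "\<And>i. is_compl_basis (\<delta> (i+1)) (R i) (n i)"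
begin

abbreviation h where "h i \<equiv> comm_dd d \<delta> i"

lemma dc: "d i \<in> carrier_mat (n (i+1)) (n i)" by (rule d_dim)
lemma dc': "d (i - 1) \<in> carrier_mat (n i) (n (i - 1))" using d_dim[of "i-1"] by simp
lemma ec: "\<delta> i \<in> carrier_mat (n (i-1)) (n i)" by (rule \<delta>_dim)
lemma ec': "\<delta> (i + 1) \<in> carrier_mat (n i) (n (i + 1))" using \<delta>_dim[of "i+1"] by simp

lemma hc: "h i \<in> carrier_mat (n i) (n i)"
  unfolding comm_dd_def using dc'[of i] ec[of i] dc[of i] ec'[of i] by auto

lemma h_expand: "v \<in> carrier_vec (n i) \<Longrightarrow>
   h i *\<^sub>v v = d (i-1) *\<^sub>v (\<delta> i *\<^sub>v v) + \<delta> (i+1) *\<^sub>v (d i *\<^sub>v v)"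
  unfolding comm_dd_def using dc'[of i] ec[of i] dc[of i] ec'[of i]
  by (subst add_mult_distrib_mat_vec[of _ "n i" "n i"]) auto

lemma ddm: "d i * d (i - 1) = 0\<^sub>m (n (i+1)) (n (i - 1))"
proof -
  have e: "i - 1 + 1 = i" "i - 1 + 2 = i + 1" by simp_all
  show ?thesis using dd[of "i-1"] unfolding e .
qed

lemma \<delta>\<delta>m: "\<delta> i * \<delta> (i + 1) = 0\<^sub>m (n (i - 1)) (n (i + 1))"
proof -
  have e: "i + 1 - 1 = i" "i + 1 - 2 = i - 1" by simp_all
  show ?thesis using \<delta>\<delta>[of "i+1"] unfolding e .
qed

lemma ddv: "x \<in> carrier_vec (n (i-1)) \<Longrightarrow> d i *\<^sub>v (d (i-1) *\<^sub>v x) = 0\<^sub>v (n (i+1))"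
  using assoc_mult_mat_vec[OF dc[of i] dc'[of i], of x, symmetric] ddm[of i] by simp

lemma \<delta>\<delta>v: "y \<in> carrier_vec (n (i+1)) \<Longrightarrow> \<delta> i *\<^sub>v (\<delta> (i+1) *\<^sub>v y) = 0\<^sub>v (n (i-1))"
  using assoc_mult_mat_vec[OF ec[of i] ec'[of i], of y, symmetric] \<delta>\<delta>m[of i] by simp

lemma h_inj: "v \<in> carrier_vec (n i) \<Longrightarrow> h i *\<^sub>v v = 0\<^sub>v (n i) \<Longrightarrow> v = 0\<^sub>v (n i)"
  using det_0_iff_vec_prod_zero_field[OF hc[of i]] inv[of i] by auto

lemma h_surj: assumes v: "v \<in> carrier_vec (n i)" shows "\<exists>u\<in>carrier_vec (n i). h i *\<^sub>v u = v"
proof -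
  from det_non_zero_imp_unit[OF hc[of i] inv[of i], of undefined]
  obtain H where H: "H \<in> carrier_mat (n i) (n i)" and hH: "h i * H = 1\<^sub>m (n i)"
    unfolding Units_def ring_mat_def by auto
  have "h i *\<^sub>v (H *\<^sub>v v) = v" using assoc_mult_mat_vec[OF hc H v, symmetric] hH v by simp
  thus ?thesis using H v by (intro bexI[of _ "H *\<^sub>v v"]) auto
qed

lemma decomp: assumes v: "v \<in> carrier_vec (n i)"
  shows "\<exists>x\<in>carrier_vec (n (i-1)). \<exists>y\<in>carrier_vec (n (i+1)). v = d (i-1) *\<^sub>v x + \<delta> (i+1) *\<^sub>v y"
proof -
  obtain u where u: "u \<in> carrier_vec (n i)" and hu: "h i *\<^sub>v u = v" using h_surj[OF v] by blast
  show ?thesis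
    by (rule bexI[of _ "\<delta> i *\<^sub>v u"], rule bexI[of _ "d i *\<^sub>v u"])
       (use h_expand[OF u] hu u ec[of i] dc[of i] in auto)
qed

lemma ker_both: assumes w: "w \<in> carrier_vec (n i)" and "d i *\<^sub>v w = 0\<^sub>v (n (i+1))"
  and "\<delta> i *\<^sub>v w = 0\<^sub>v (n (i-1))" shows "w = 0\<^sub>v (n i)"
proof (rule h_inj[OF w])
  show "h i *\<^sub>v w = 0\<^sub>v (n i)" unfolding h_expand[OF w] assms(2,3)
    using dc'[of i] ec'[of i] by simp
qed

lemma sum_zero:
  assumes x: "x \<in> carrier_vec (n (i-1))" and y: "y \<in> carrier_vec (n (i+1))"
    and z: "d (i-1) *\<^sub>v x + \<delta> (i+1) *\<^sub>v y = 0\<^sub>v (n i)"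
  shows "d (i-1) *\<^sub>v x = 0\<^sub>v (n i) \<and> \<delta> (i+1) *\<^sub>v y = 0\<^sub>v (n i)"
proof -
  have dx: "d (i-1) *\<^sub>v x \<in> carrier_vec (n i)" using dc'[of i] x by simp
  have ey: "\<delta> (i+1) *\<^sub>v y \<in> carrier_vec (n i)" using ec'[of i] y by simp
  have 1: "d i *\<^sub>v (\<delta> (i+1) *\<^sub>v y) = 0\<^sub>v (n (i+1))"
  proof -
    have "d i *\<^sub>v (d (i-1) *\<^sub>v x + \<delta> (i+1) *\<^sub>v y) = 0\<^sub>v (n (i+1))" unfolding z using dc[of i] by simp
    thus ?thesis using mult_add_distrib_mat_vec[OF dc[of i] dx ey] ddv[OF x] ey dc[of i] by simp
  qed
  have 2: "\<delta> i *\<^sub>v (d (i-1) *\<^sub>v x) = 0\<^sub>v (n (i-1))"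
  proof -
    have "\<delta> i *\<^sub>v (d (i-1) *\<^sub>v x + \<delta> (i+1) *\<^sub>v y) = 0\<^sub>v (n (i-1))" unfolding z using ec[of i] by simp
    thus ?thesis using mult_add_distrib_mat_vec[OF ec[of i] dx ey] \<delta>\<delta>v[OF y] dx ec[of i] by simp
  qed
  have a: "\<delta> (i+1) *\<^sub>v y = 0\<^sub>v (n i)" by (rule ker_both[OF ey 1 \<delta>\<delta>v[OF y]])
  have b: "d (i-1) *\<^sub>v x = 0\<^sub>v (n i)" by (rule ker_both[OF dx ddv[OF x] 2])
  show ?thesis using a b by simp
qed

lemma exact_d: assumes u: "u \<in> carrier_vec (n i)" and du: "d i *\<^sub>v u = 0\<^sub>v (n (i+1))"
  shows "\<exists>x\<in>carrier_vec (n (i-1)). u = d (i-1) *\<^sub>v x"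
proof -
  obtain x y where x: "x \<in> carrier_vec (n (i-1))" and y: "y \<in> carrier_vec (n (i+1))"
    and uxy: "u = d (i-1) *\<^sub>v x + \<delta> (i+1) *\<^sub>v y" using decomp[OF u] by blast
  have dx: "d (i-1) *\<^sub>v x \<in> carrier_vec (n i)" using dc'[of i] x by simp
  have ey: "\<delta> (i+1) *\<^sub>v y \<in> carrier_vec (n i)" using ec'[of i] y by simp
  have 1: "d i *\<^sub>v (\<delta> (i+1) *\<^sub>v y) = 0\<^sub>v (n (i+1))"
    using du unfolding uxy using mult_add_distrib_mat_vec[OF dc[of i] dx ey] ddv[OF x] ey dc[of i] by simp
  have a: "\<delta> (i+1) *\<^sub>v y = 0\<^sub>v (n i)" by (rule ker_both[OF ey 1 \<delta>\<delta>v[OF y]])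
  show ?thesis using x uxy a dx by auto
qed

lemma exact_\<delta>: assumes u: "u \<in> carrier_vec (n i)" and du: "\<delta> i *\<^sub>v u = 0\<^sub>v (n (i-1))"
  shows "\<exists>y\<in>carrier_vec (n (i+1)). u = \<delta> (i+1) *\<^sub>v y"
proof -
  obtain x y where x: "x \<in> carrier_vec (n (i-1))" and y: "y \<in> carrier_vec (n (i+1))"
    and uxy: "u = d (i-1) *\<^sub>v x + \<delta> (i+1) *\<^sub>v y" using decomp[OF u] by blast
  have dx: "d (i-1) *\<^sub>v x \<in> carrier_vec (n i)" using dc'[of i] x by simp
  have ey: "\<delta> (i+1) *\<^sub>v y \<in> carrier_vec (n i)" using ec'[of i] y by simp
  have 2: "\<delta> i *\<^sub>v (d (i-1) *\<^sub>v x) = 0\<^sub>v (n (i-1))"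
    using du unfolding uxy using mult_add_distrib_mat_vec[OF ec[of i] dx ey] \<delta>\<delta>v[OF y] dx ec[of i] by simp
  have b: "d (i-1) *\<^sub>v x = 0\<^sub>v (n i)" by (rule ker_both[OF dx ddv[OF x] 2])
  show ?thesis using y uxy b ey by auto
qed

end

lemma ex1_pairD: assumes "\<exists>!(w, c). P w c" "P w1 c1" "P w2 c2" shows "w1 = w2 \<and> c1 = c2"
proof -
  from assms(1) obtain z where hz: "\<And>z'. (case z' of (w, c) \<Rightarrow> P w c) \<Longrightarrow> z' = z"
    by (auto elim!: ex1E)
  have "(w1, c1) = z" "(w2, c2) = z" using hz[of "(w1,c1)"] hz[of "(w2,c2)"] assms(2,3) by auto
  thus ?thesis by (metis prod.inject)
qed

context cx begin

definition kB where "kB i = dim_col (B i)"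
definition kR where "kR i = dim_col (R i)"

lemma Bc: "B i \<in> carrier_mat (n i) (kB i)"
  using B[of i] unfolding is_compl_basis_def kB_def by auto

lemma Rc: "R i \<in> carrier_mat (n i) (kR i)"
  using R[of i] unfolding is_compl_basis_def kR_def by auto

lemma B_ex1: "v \<in> carrier_vec (n i) \<Longrightarrow>
  \<exists>!(w, c). w \<in> col_range (d (i-1)) \<and> c \<in> carrier_vec (kB i) \<and> v = w + B i *\<^sub>v c"
  using B[of i] unfolding is_compl_basis_def kB_def by blast

lemma B_ex: assumes v: "v \<in> carrier_vec (n i)"
  shows "\<exists>x\<in>carrier_vec (n (i-1)). \<exists>c\<in>carrier_vec (kB i). v = d (i-1) *\<^sub>v x + B i *\<^sub>v c"
proof -
  from B_ex1[OF v] obtain w c where w: "w \<in> col_range (d (i-1))" and c: "c \<in> carrier_vec (kB i)"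
    and vw: "v = w + B i *\<^sub>v c" by auto
  from w obtain x where x: "x \<in> carrier_vec (n (i-1))" and wx: "w = d (i-1) *\<^sub>v x"
    unfolding col_range_def using dc'[of i] by auto
  show ?thesis using x c vw wx by auto
qed

lemma B_uniq: assumes x: "x \<in> carrier_vec (n (i-1))" and c: "c \<in> carrier_vec (kB i)"
  and e: "B i *\<^sub>v c = d (i-1) *\<^sub>v x" shows "c = 0\<^sub>v (kB i)"
proof -
  let ?v = "B i *\<^sub>v c"
  have v: "?v \<in> carrier_vec (n i)" by (rule mult_mat_vec_carrier[OF Bc c])
  note u = B_ex1[OF v]
  have z0: "0\<^sub>v (n i) \<in> col_range (d (i-1))"
    unfolding col_range_def using dc'[of i] by (auto intro!: exI[of _ "0\<^sub>v (n (i-1))"])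
  have dx: "d (i-1) *\<^sub>v x \<in> col_range (d (i-1))"
    unfolding col_range_def using dc'[of i] x by auto
  have p1: "?v = 0\<^sub>v (n i) + B i *\<^sub>v c" using v by simp
  have p2: "?v = d (i-1) *\<^sub>v x + B i *\<^sub>v 0\<^sub>v (kB i)" using e dc'[of i] x Bc[of i] by simp
  have "0\<^sub>v (n i) = d (i-1) *\<^sub>v x \<and> c = 0\<^sub>v (kB i)"
  proof (rule ex1_pairD[OF u])
    show "0\<^sub>v (n i) \<in> col_range (d (i-1)) \<and> c \<in> carrier_vec (kB i) \<and> ?v = 0\<^sub>v (n i) + B i *\<^sub>v c"
      using z0 c p1 by blast
    show "d (i-1) *\<^sub>v x \<in> col_range (d (i-1)) \<and> 0\<^sub>v (kB i) \<in> carrier_vec (kB i) \<and> ?v = d (i-1) *\<^sub>v x + B i *\<^sub>v 0\<^sub>v (kB i)"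
      using dx p2 zero_carrier_vec[of "kB i"] by blast
  qed
  thus ?thesis by simp
qed

lemma B_uniq': assumes x: "x \<in> carrier_vec (n (i-1))" and c: "c \<in> carrier_vec (kB i)"
  and e: "d (i-1) *\<^sub>v x + B i *\<^sub>v c = 0\<^sub>v (n i)" shows "c = 0\<^sub>v (kB i)"
proof -
  have v: "0\<^sub>v (n i) \<in> carrier_vec (n i)" by simp
  note u = B_ex1[OF v]
  have z0: "0\<^sub>v (n i) \<in> col_range (d (i-1))"
    unfolding col_range_def using dc'[of i] by (auto intro!: exI[of _ "0\<^sub>v (n (i-1))"])
  have dx: "d (i-1) *\<^sub>v x \<in> col_range (d (i-1))"
    unfolding col_range_def using dc'[of i] x by auto
  have p2: "0\<^sub>v (n i) = 0\<^sub>v (n i) + B i *\<^sub>v 0\<^sub>v (kB i)" using Bc[of i] by simp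
  have "d (i-1) *\<^sub>v x = 0\<^sub>v (n i) \<and> c = 0\<^sub>v (kB i)"
  proof (rule ex1_pairD[OF u])
    show "d (i-1) *\<^sub>v x \<in> col_range (d (i-1)) \<and> c \<in> carrier_vec (kB i) \<and> 0\<^sub>v (n i) = d (i-1) *\<^sub>v x + B i *\<^sub>v c"
      using dx c e by simp
    show "0\<^sub>v (n i) \<in> col_range (d (i-1)) \<and> 0\<^sub>v (kB i) \<in> carrier_vec (kB i) \<and> 0\<^sub>v (n i) = 0\<^sub>v (n i) + B i *\<^sub>v 0\<^sub>v (kB i)"
      using z0 p2 zero_carrier_vec[of "kB i"] by blast
  qed
  thus ?thesis by simp
qed

lemma R_ex1: "v \<in> carrier_vec (n i) \<Longrightarrow>
  \<exists>!(w, c). w \<in> col_range (\<delta> (i+1)) \<and> c \<in> carrier_vec (kR i) \<and> v = w + R i *\<^sub>v c"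
  using R[of i] unfolding is_compl_basis_def kR_def by blast

lemma R_ex: assumes v: "v \<in> carrier_vec (n i)"
  shows "\<exists>x\<in>carrier_vec (n (i+1)). \<exists>c\<in>carrier_vec (kR i). v = \<delta> (i+1) *\<^sub>v x + R i *\<^sub>v c"
proof -
  from R_ex1[OF v] obtain w c where w: "w \<in> col_range (\<delta> (i+1))" and c: "c \<in> carrier_vec (kR i)"
    and vw: "v = w + R i *\<^sub>v c" by auto
  from w obtain x where x: "x \<in> carrier_vec (n (i+1))" and wx: "w = \<delta> (i+1) *\<^sub>v x"
    unfolding col_range_def using ec'[of i] by auto
  show ?thesis using x c vw wx by auto
qed

lemma R_uniq: assumes x: "x \<in> carrier_vec (n (i+1))" and c: "c \<in> carrier_vec (kR i)"
  and e: "R i *\<^sub>v c = \<delta> (i+1) *\<^sub>v x" shows "c = 0\<^sub>v (kR i)"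
proof -
  let ?v = "R i *\<^sub>v c"
  have v: "?v \<in> carrier_vec (n i)" by (rule mult_mat_vec_carrier[OF Rc c])
  note u = R_ex1[OF v]
  have z0: "0\<^sub>v (n i) \<in> col_range (\<delta> (i+1))"
    unfolding col_range_def using ec'[of i] by (auto intro!: exI[of _ "0\<^sub>v (n (i+1))"])
  have dx: "\<delta> (i+1) *\<^sub>v x \<in> col_range (\<delta> (i+1))"
    unfolding col_range_def using ec'[of i] x by auto
  have p1: "?v = 0\<^sub>v (n i) + R i *\<^sub>v c" using v by simp
  have p2: "?v = \<delta> (i+1) *\<^sub>v x + R i *\<^sub>v 0\<^sub>v (kR i)" using e ec'[of i] x Rc[of i] by simp
  have "0\<^sub>v (n i) = \<delta> (i+1) *\<^sub>v x \<and> c = 0\<^sub>v (kR i)"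
  proof (rule ex1_pairD[OF u])
    show "0\<^sub>v (n i) \<in> col_range (\<delta> (i+1)) \<and> c \<in> carrier_vec (kR i) \<and> ?v = 0\<^sub>v (n i) + R i *\<^sub>v c"
      using z0 c p1 by blast
    show "\<delta> (i+1) *\<^sub>v x \<in> col_range (\<delta> (i+1)) \<and> 0\<^sub>v (kR i) \<in> carrier_vec (kR i) \<and> ?v = \<delta> (i+1) *\<^sub>v x + R i *\<^sub>v 0\<^sub>v (kR i)"
      using dx p2 zero_carrier_vec[of "kR i"] by blast
  qed
  thus ?thesis by simp
qed

lemma R_uniq': assumes x: "x \<in> carrier_vec (n (i+1))" and c: "c \<in> carrier_vec (kR i)"
  and e: "\<delta> (i+1) *\<^sub>v x + R i *\<^sub>v c = 0\<^sub>v (n i)" shows "c = 0\<^sub>v (kR i)"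
proof -
  have v: "0\<^sub>v (n i) \<in> carrier_vec (n i)" by simp
  note u = R_ex1[OF v]
  have z0: "0\<^sub>v (n i) \<in> col_range (\<delta> (i+1))"
    unfolding col_range_def using ec'[of i] by (auto intro!: exI[of _ "0\<^sub>v (n (i+1))"])
  have dx: "\<delta> (i+1) *\<^sub>v x \<in> col_range (\<delta> (i+1))"
    unfolding col_range_def using ec'[of i] x by auto
  have p2: "0\<^sub>v (n i) = 0\<^sub>v (n i) + R i *\<^sub>v 0\<^sub>v (kR i)" using Rc[of i] by simp
  have "\<delta> (i+1) *\<^sub>v x = 0\<^sub>v (n i) \<and> c = 0\<^sub>v (kR i)"
  proof (rule ex1_pairD[OF u])
    show "\<delta> (i+1) *\<^sub>v x \<in> col_range (\<delta> (i+1)) \<and> c \<in> carrier_vec (kR i) \<and> 0\<^sub>v (n i) = \<delta> (i+1) *\<^sub>v x + R i *\<^sub>v c"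
      using dx c e by simp
    show "0\<^sub>v (n i) \<in> col_range (\<delta> (i+1)) \<and> 0\<^sub>v (kR i) \<in> carrier_vec (kR i) \<and> 0\<^sub>v (n i) = 0\<^sub>v (n i) + R i *\<^sub>v 0\<^sub>v (kR i)"
      using z0 p2 zero_carrier_vec[of "kR i"] by blast
  qed
  thus ?thesis by simp
qed


definition X where "X i = d (i-1) * B (i-1)"
definition Y where "Y i = \<delta> (i+1) * R (i+1)"

lemma Bc': "B (i-1) \<in> carrier_mat (n (i-1)) (kB (i-1))" by (rule Bc)
lemma Rc': "R (i+1) \<in> carrier_mat (n (i+1)) (kR (i+1))" by (rule Rc)

lemma Xc: "X i \<in> carrier_mat (n i) (kB (i-1))"
  unfolding X_def by (rule mult_carrier_mat[OF dc' Bc'])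

lemma Yc: "Y i \<in> carrier_mat (n i) (kR (i+1))"
  unfolding Y_def by (rule mult_carrier_mat[OF ec' Rc'])

lemma X_vec: "a \<in> carrier_vec (kB (i-1)) \<Longrightarrow> X i *\<^sub>v a = d (i-1) *\<^sub>v (B (i-1) *\<^sub>v a)"
  unfolding X_def by (rule assoc_mult_mat_vec[OF dc' Bc'])

lemma Y_vec: "a \<in> carrier_vec (kR (i+1)) \<Longrightarrow> Y i *\<^sub>v a = \<delta> (i+1) *\<^sub>v (R (i+1) *\<^sub>v a)"
  unfolding Y_def by (rule assoc_mult_mat_vec[OF ec' Rc'])

lemma X_range: assumes x: "x \<in> carrier_vec (n (i-1))"
  shows "\<exists>a\<in>carrier_vec (kB (i-1)). d (i-1) *\<^sub>v x = X i *\<^sub>v a"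
proof -
  obtain z a where z: "z \<in> carrier_vec (n (i-1-1))" and a: "a \<in> carrier_vec (kB (i-1))"
    and xz: "x = d (i-1-1) *\<^sub>v z + B (i-1) *\<^sub>v a" using B_ex[OF x] by blast
  have dz: "d (i-1-1) *\<^sub>v z \<in> carrier_vec (n (i-1))" by (rule mult_mat_vec_carrier[OF dc' z])
  have ba: "B (i-1) *\<^sub>v a \<in> carrier_vec (n (i-1))" by (rule mult_mat_vec_carrier[OF Bc' a])
  have "d (i-1) *\<^sub>v x = d (i-1) *\<^sub>v (d (i-1-1) *\<^sub>v z) + d (i-1) *\<^sub>v (B (i-1) *\<^sub>v a)"
    unfolding xz by (rule mult_add_distrib_mat_vec[OF dc' dz ba])
  also have "d (i-1) *\<^sub>v (d (i-1-1) *\<^sub>v z) = 0\<^sub>v (n i)" using ddv[OF z] by simp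
  also have "0\<^sub>v (n i) + d (i-1) *\<^sub>v (B (i-1) *\<^sub>v a) = X i *\<^sub>v a"
    using X_vec[OF a] mult_mat_vec_carrier[OF dc' ba] by simp
  finally show ?thesis using a by blast
qed

lemma Y_range: assumes y: "y \<in> carrier_vec (n (i+1))"
  shows "\<exists>a\<in>carrier_vec (kR (i+1)). \<delta> (i+1) *\<^sub>v y = Y i *\<^sub>v a"
proof -
  obtain z a where z: "z \<in> carrier_vec (n (i+1+1))" and a: "a \<in> carrier_vec (kR (i+1))"
    and yz: "y = \<delta> (i+1+1) *\<^sub>v z + R (i+1) *\<^sub>v a" using R_ex[OF y] by blast
  have dz: "\<delta> (i+1+1) *\<^sub>v z \<in> carrier_vec (n (i+1))" by (rule mult_mat_vec_carrier[OF ec' z])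
  have ra: "R (i+1) *\<^sub>v a \<in> carrier_vec (n (i+1))" by (rule mult_mat_vec_carrier[OF Rc' a])
  have "\<delta> (i+1) *\<^sub>v y = \<delta> (i+1) *\<^sub>v (\<delta> (i+1+1) *\<^sub>v z) + \<delta> (i+1) *\<^sub>v (R (i+1) *\<^sub>v a)"
    unfolding yz by (rule mult_add_distrib_mat_vec[OF ec' dz ra])
  also have "\<delta> (i+1) *\<^sub>v (\<delta> (i+1+1) *\<^sub>v z) = 0\<^sub>v (n i)" using \<delta>\<delta>v[OF z] by simp
  also have "0\<^sub>v (n i) + \<delta> (i+1) *\<^sub>v (R (i+1) *\<^sub>v a) = Y i *\<^sub>v a"
    using Y_vec[OF a] mult_mat_vec_carrier[OF ec' ra] by simp
  finally show ?thesis using a by blast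
qed

lemma X_inj: assumes a: "a \<in> carrier_vec (kB (i-1))" and z: "X i *\<^sub>v a = 0\<^sub>v (n i)"
  shows "a = 0\<^sub>v (kB (i-1))"
proof -
  have ba: "B (i-1) *\<^sub>v a \<in> carrier_vec (n (i-1))" by (rule mult_mat_vec_carrier[OF Bc' a])
  have "d (i-1) *\<^sub>v (B (i-1) *\<^sub>v a) = 0\<^sub>v (n (i-1+1))" using z X_vec[OF a] by simp
  from exact_d[OF ba this] obtain x where x: "x \<in> carrier_vec (n (i-1-1))"
    and e: "B (i-1) *\<^sub>v a = d (i-1-1) *\<^sub>v x" by blast
  show ?thesis by (rule B_uniq[OF x a e])
qed

lemma Y_inj: assumes a: "a \<in> carrier_vec (kR (i+1))" and z: "Y i *\<^sub>v a = 0\<^sub>v (n i)"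
  shows "a = 0\<^sub>v (kR (i+1))"
proof -
  have ra: "R (i+1) *\<^sub>v a \<in> carrier_vec (n (i+1))" by (rule mult_mat_vec_carrier[OF Rc' a])
  have "\<delta> (i+1) *\<^sub>v (R (i+1) *\<^sub>v a) = 0\<^sub>v (n (i+1-1))" using z Y_vec[OF a] by simp
  from exact_\<delta>[OF ra this] obtain y where y: "y \<in> carrier_vec (n (i+1+1))"
    and e: "R (i+1) *\<^sub>v a = \<delta> (i+1+1) *\<^sub>v y" by blast
  show ?thesis by (rule R_uniq[OF y a e])
qed
end

lemma append_zero_vec: "0\<^sub>v a @\<^sub>v 0\<^sub>v b = (0\<^sub>v (a + b) :: complex vec)"
  by (rule eq_vecI) auto

lemma cat_bij:
  fixes A B :: "complex mat"
  assumes A: "A \<in> carrier_mat m a" and B: "B \<in> carrier_mat m b"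
    and surj: "\<And>v. v \<in> carrier_vec m \<Longrightarrow> \<exists>x\<in>carrier_vec a. \<exists>y\<in>carrier_vec b. v = A *\<^sub>v x + B *\<^sub>v y"
    and inj: "\<And>x y. x \<in> carrier_vec a \<Longrightarrow> y \<in> carrier_vec b \<Longrightarrow> A *\<^sub>v x + B *\<^sub>v y = 0\<^sub>v m
        \<Longrightarrow> x = 0\<^sub>v a \<and> y = 0\<^sub>v b"
  shows "a + b = m" "det (cat_cols m A B) \<noteq> 0"
proof -
  have C: "cat_cols m A B \<in> carrier_mat m (a + b)" using A B by simp
  have inj': "c = 0\<^sub>v (a + b)" if c: "c \<in> carrier_vec (a + b)" and z: "cat_cols m A B *\<^sub>v c = 0\<^sub>v m" for c
  proof -
    have ce: "c = vec_first c a @\<^sub>v vec_last c b" using c by simp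
    have "A *\<^sub>v vec_first c a + B *\<^sub>v vec_last c b = 0\<^sub>v m"
      using z cat_mult_vec[OF A B vec_first_carrier vec_last_carrier] ce by metis
    from inj[OF vec_first_carrier vec_last_carrier this]
    have "vec_first c a = 0\<^sub>v a" "vec_last c b = 0\<^sub>v b" by auto
    thus ?thesis using ce append_zero_vec by metis
  qed
  have surj': "\<exists>c\<in>carrier_vec (a + b). cat_cols m A B *\<^sub>v c = v" if v: "v \<in> carrier_vec m" for v
  proof -
    obtain x y where x: "x \<in> carrier_vec a" and y: "y \<in> carrier_vec b" and e: "v = A *\<^sub>v x + B *\<^sub>v y"
      using surj[OF v] by blast
    show ?thesis by (rule bexI[of _ "x @\<^sub>v y"]) (use cat_mult_vec[OF A B x y] e x y in auto)
  qed
  show ab: "a + b = m" by (rule square_of_bij[OF C surj' inj'])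
  show "det (cat_cols m A B) \<noteq> 0" by (rule det_nz_of_inj[of _ m]) (use C ab inj' in auto)
qed

context cx begin

definition E where "E i = cat_cols (n i) (X i) (Y i)"
definition P where "P i = cat_cols (n i) (X i) (B i)"
definition Q where "Q i = cat_cols (n i) (R i) (Y i)"

lemma E_surj: assumes v: "v \<in> carrier_vec (n i)"
  shows "\<exists>a\<in>carrier_vec (kB (i-1)). \<exists>b\<in>carrier_vec (kR (i+1)). v = X i *\<^sub>v a + Y i *\<^sub>v b"
proof -
  obtain x y where x: "x \<in> carrier_vec (n (i-1))" and y: "y \<in> carrier_vec (n (i+1))"
    and e: "v = d (i-1) *\<^sub>v x + \<delta> (i+1) *\<^sub>v y" using decomp[OF v] by blast
  obtain a where a: "a \<in> carrier_vec (kB (i-1))" and ea: "d (i-1) *\<^sub>v x = X i *\<^sub>v a" using X_range[OF x] by blast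
  obtain b where b: "b \<in> carrier_vec (kR (i+1))" and eb: "\<delta> (i+1) *\<^sub>v y = Y i *\<^sub>v b" using Y_range[OF y] by blast
  have "v = X i *\<^sub>v a + Y i *\<^sub>v b" using e ea eb by simp
  thus ?thesis using a b by blast
qed

lemma E_inj: assumes a: "a \<in> carrier_vec (kB (i-1))" and b: "b \<in> carrier_vec (kR (i+1))"
  and z: "X i *\<^sub>v a + Y i *\<^sub>v b = 0\<^sub>v (n i)"
  shows "a = 0\<^sub>v (kB (i-1)) \<and> b = 0\<^sub>v (kR (i+1))"
proof -
  have ba: "B (i-1) *\<^sub>v a \<in> carrier_vec (n (i-1))" by (rule mult_mat_vec_carrier[OF Bc' a])
  have rb: "R (i+1) *\<^sub>v b \<in> carrier_vec (n (i+1))" by (rule mult_mat_vec_carrier[OF Rc' b])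
  have "d (i-1) *\<^sub>v (B (i-1) *\<^sub>v a) + \<delta> (i+1) *\<^sub>v (R (i+1) *\<^sub>v b) = 0\<^sub>v (n i)"
    using z X_vec[OF a] Y_vec[OF b] by simp
  from sum_zero[OF ba rb this]
  have "X i *\<^sub>v a = 0\<^sub>v (n i)" "Y i *\<^sub>v b = 0\<^sub>v (n i)" using X_vec[OF a] Y_vec[OF b] by auto
  thus ?thesis using X_inj[OF a] Y_inj[OF b] by blast
qed

lemma E_props: "kB (i-1) + kR (i+1) = n i" "det (E i) \<noteq> 0"
proof -
  note cb = cat_bij[OF Xc Yc, of i]
  have s: "\<And>v. v \<in> carrier_vec (n i) \<Longrightarrow> \<exists>x\<in>carrier_vec (kB (i-1)). \<exists>y\<in>carrier_vec (kR (i+1)). v = X i *\<^sub>v x + Y i *\<^sub>v y"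
    by (rule E_surj)
  have j: "\<And>x y. x \<in> carrier_vec (kB (i-1)) \<Longrightarrow> y \<in> carrier_vec (kR (i+1)) \<Longrightarrow>
      X i *\<^sub>v x + Y i *\<^sub>v y = 0\<^sub>v (n i) \<Longrightarrow> x = 0\<^sub>v (kB (i-1)) \<and> y = 0\<^sub>v (kR (i+1))"
    by (rule E_inj)
  show "kB (i-1) + kR (i+1) = n i" by (rule cb(1)[OF s j])
  show "det (E i) \<noteq> 0" unfolding E_def by (rule cb(2)[OF s j])
qed

lemma P_props: "kB (i-1) + kB i = n i" "det (P i) \<noteq> 0"
proof -
  note cb = cat_bij[OF Xc Bc, of i]
  have s: "\<exists>x\<in>carrier_vec (kB (i-1)). \<exists>y\<in>carrier_vec (kB i). v = X i *\<^sub>v x + B i *\<^sub>v y"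
    if v: "v \<in> carrier_vec (n i)" for v
  proof -
    obtain x c where x: "x \<in> carrier_vec (n (i-1))" and c: "c \<in> carrier_vec (kB i)"
      and e: "v = d (i-1) *\<^sub>v x + B i *\<^sub>v c" using B_ex[OF v] by blast
    obtain a where a: "a \<in> carrier_vec (kB (i-1))" and ea: "d (i-1) *\<^sub>v x = X i *\<^sub>v a" using X_range[OF x] by blast
    have "v = X i *\<^sub>v a + B i *\<^sub>v c" using e ea by simp
    thus ?thesis using a c by blast
  qed
  have j: "x = 0\<^sub>v (kB (i-1)) \<and> y = 0\<^sub>v (kB i)"
    if x: "x \<in> carrier_vec (kB (i-1))" and y: "y \<in> carrier_vec (kB i)" and z: "X i *\<^sub>v x + B i *\<^sub>v y = 0\<^sub>v (n i)" for x y
  proof -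
    have bx: "B (i-1) *\<^sub>v x \<in> carrier_vec (n (i-1))" by (rule mult_mat_vec_carrier[OF Bc' x])
    have "d (i-1) *\<^sub>v (B (i-1) *\<^sub>v x) + B i *\<^sub>v y = 0\<^sub>v (n i)" using z X_vec[OF x] by simp
    from B_uniq'[OF bx y this] have y0: "y = 0\<^sub>v (kB i)" .
    have "X i *\<^sub>v x = 0\<^sub>v (n i)" using z unfolding y0
      using mult_mat_vec_carrier[OF Xc x] Bc[of i] by simp
    from X_inj[OF x this] y0 show ?thesis by blast
  qed
  show "kB (i-1) + kB i = n i" by (rule cb(1)[OF s j])
  show "det (P i) \<noteq> 0" unfolding P_def by (rule cb(2)[OF s j])
qed

lemma Q_props: "kR i + kR (i+1) = n i" "det (Q i) \<noteq> 0"
proof -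
  note cb = cat_bij[OF Rc Yc, of i]
  have s: "\<exists>x\<in>carrier_vec (kR i). \<exists>y\<in>carrier_vec (kR (i+1)). v = R i *\<^sub>v x + Y i *\<^sub>v y"
    if v: "v \<in> carrier_vec (n i)" for v
  proof -
    obtain y c where y: "y \<in> carrier_vec (n (i+1))" and c: "c \<in> carrier_vec (kR i)"
      and e: "v = \<delta> (i+1) *\<^sub>v y + R i *\<^sub>v c" using R_ex[OF v] by blast
    obtain b where b: "b \<in> carrier_vec (kR (i+1))" and eb: "\<delta> (i+1) *\<^sub>v y = Y i *\<^sub>v b" using Y_range[OF y] by blast
    have "v = R i *\<^sub>v c + Y i *\<^sub>v b" unfolding e eb
      using mult_mat_vec_carrier[OF Yc b] mult_mat_vec_carrier[OF Rc c] by (rule comm_add_vec)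
    thus ?thesis using b c by blast
  qed
  have j: "x = 0\<^sub>v (kR i) \<and> y = 0\<^sub>v (kR (i+1))"
    if x: "x \<in> carrier_vec (kR i)" and y: "y \<in> carrier_vec (kR (i+1))" and z: "R i *\<^sub>v x + Y i *\<^sub>v y = 0\<^sub>v (n i)" for x y
  proof -
    have ry: "R (i+1) *\<^sub>v y \<in> carrier_vec (n (i+1))" by (rule mult_mat_vec_carrier[OF Rc' y])
    have "\<delta> (i+1) *\<^sub>v (R (i+1) *\<^sub>v y) + R i *\<^sub>v x = 0\<^sub>v (n i)"
      using z Y_vec[OF y] comm_add_vec[OF mult_mat_vec_carrier[OF Rc x] mult_mat_vec_carrier[OF Yc y]] by simp
    from R_uniq'[OF ry x this] have x0: "x = 0\<^sub>v (kR i)" .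
    have "Y i *\<^sub>v y = 0\<^sub>v (n i)" using z unfolding x0
      using mult_mat_vec_carrier[OF Yc y] Rc[of i] by simp
    from Y_inj[OF y this] x0 show ?thesis by blast
  qed
  show "kR i + kR (i+1) = n i" by (rule cb(1)[OF s j])
  show "det (Q i) \<noteq> 0" unfolding Q_def by (rule cb(2)[OF s j])
qed

lemma kRB: "kR (i+1) = kB i" using E_props(1)[of i] P_props(1)[of i] by simp
lemma kBR: "kB (i-1) = kR i" using E_props(1)[of i] Q_props(1)[of i] by simp

end

lemma col_cat:
  assumes A: "A \<in> carrier_mat m a" and B: "B \<in> carrier_mat m b" and j: "j < a + b"
  shows "col (cat_cols m A B) j = (if j < a then col A j else col B (j - a))"
proof -
  have "(cols A @ cols B) ! j = (if j < a then col A j else col B (j - a))"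
    using A B j by (auto simp: nth_append)
  moreover have "(cols A @ cols B) ! j \<in> carrier_vec m"
    using A B j by (auto simp: nth_append)
  ultimately show ?thesis unfolding cat_cols_def using A B j by (subst col_mat_of_cols) auto
qed

lemma mult_cat:
  fixes M A B :: "complex mat"
  assumes M: "M \<in> carrier_mat m' m" and A: "A \<in> carrier_mat m a" and B: "B \<in> carrier_mat m b"
  shows "M * cat_cols m A B = cat_cols m' (M * A) (M * B)"
proof (rule mat_col_eqI)
  have MA: "M * A \<in> carrier_mat m' a" and MB: "M * B \<in> carrier_mat m' b" using M A B by auto
  fix j assume "j < dim_col (cat_cols m' (M * A) (M * B))"
  hence j: "j < a + b" using carrier_matD(2)[OF cat_cols_carrier[OF MA MB]] by simp
  show "col (M * cat_cols m A B) j = col (cat_cols m' (M * A) (M * B)) j"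
    unfolding col_mult2[OF M cat_cols_carrier[OF A B] j] col_cat[OF A B j] col_cat[OF MA MB j]
    using M A B j by auto
next
  have MA: "M * A \<in> carrier_mat m' a" and MB: "M * B \<in> carrier_mat m' b" using M A B by auto
  have C1: "M * cat_cols m A B \<in> carrier_mat m' (a + b)" using M A B by simp
  have C2: "cat_cols m' (M * A) (M * B) \<in> carrier_mat m' (a + b)" using MA MB by simp
  show "dim_row (M * cat_cols m A B) = dim_row (cat_cols m' (M * A) (M * B))"
    using carrier_matD(1)[OF C1] carrier_matD(1)[OF C2] by simp
  show "dim_col (M * cat_cols m A B) = dim_col (cat_cols m' (M * A) (M * B))"
    using carrier_matD(2)[OF C1] carrier_matD(2)[OF C2] by simp
qed

context cx begin

lemma Gex: "\<exists>G\<in>carrier_mat (kB (i-1)) (kR i). d (i-1) * Y (i-1) = X i * G"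
proof -
  have Y': "Y (i-1) \<in> carrier_mat (n (i-1)) (kR i)" using Yc[of "i-1"] by simp
  have C: "d (i-1) * Y (i-1) \<in> carrier_mat (n i) (kR i)" by (rule mult_carrier_mat[OF dc' Y'])
  show ?thesis
  proof (rule mat_decomp1[OF Xc C])
    fix j assume j: "j < kR i"
    have cy: "col (Y (i-1)) j \<in> carrier_vec (n (i-1))" using Y' j by simp
    have "col (d (i-1) * Y (i-1)) j = d (i-1) *\<^sub>v col (Y (i-1)) j" by (rule col_mult2[OF dc' Y' j])
    thus "\<exists>u\<in>carrier_vec (kB (i-1)). col (d (i-1) * Y (i-1)) j = X i *\<^sub>v u"
      using X_range[OF cy] by simp
  qed
qed

lemma G'ex: "\<exists>G\<in>carrier_mat (kR i) (kB (i-1)). \<delta> i * X i = Y (i-1) * G"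
proof -
  have Y': "Y (i-1) \<in> carrier_mat (n (i-1)) (kR i)" using Yc[of "i-1"] by simp
  have C: "\<delta> i * X i \<in> carrier_mat (n (i-1)) (kB (i-1))" by (rule mult_carrier_mat[OF ec Xc])
  show ?thesis
  proof (rule mat_decomp1[OF Y' C])
    fix j assume j: "j < kB (i-1)"
    have cx: "col (X i) j \<in> carrier_vec (n (i-1+1))" using Xc[of i] j by simp
    have "col (\<delta> i * X i) j = \<delta> i *\<^sub>v col (X i) j" by (rule col_mult2[OF ec Xc j])
    thus "\<exists>u\<in>carrier_vec (kR i). col (\<delta> i * X i) j = Y (i-1) *\<^sub>v u"
      using Y_range[OF cx] by simp
  qed
qed

lemma Bdec: "\<exists>W\<in>carrier_mat (kR (i+1)) (kB i). \<exists>U\<in>carrier_mat (kB (i-1)) (kB i). B i = X i * U + Y i * W"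
proof -
  have "\<exists>U\<in>carrier_mat (kB (i-1)) (kB i). \<exists>W\<in>carrier_mat (kR (i+1)) (kB i). B i = X i * U + Y i * W"
  proof (rule mat_decomp2[OF Xc Yc Bc])
    fix j assume j: "j < kB i"
    have "col (B i) j \<in> carrier_vec (n i)" using Bc[of i] j by simp
    from E_surj[OF this]
    show "\<exists>u\<in>carrier_vec (kB (i-1)). \<exists>w\<in>carrier_vec (kR (i+1)). col (B i) j = X i *\<^sub>v u + Y i *\<^sub>v w" .
  qed
  thus ?thesis by blast
qed

lemma Rdec: "\<exists>\<Gamma>\<in>carrier_mat (kB (i-1)) (kR i). \<exists>V\<in>carrier_mat (kR (i+1)) (kR i). R i = X i * \<Gamma> + Y i * V"
proof (rule mat_decomp2[OF Xc Yc Rc])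
  fix j assume j: "j < kR i"
  have "col (R i) j \<in> carrier_vec (n i)" using Rc[of i] j by simp
  from E_surj[OF this]
  show "\<exists>u\<in>carrier_vec (kB (i-1)). \<exists>w\<in>carrier_vec (kR (i+1)). col (R i) j = X i *\<^sub>v u + Y i *\<^sub>v w" .
qed

definition G where "G i = (SOME G. G \<in> carrier_mat (kB (i-1)) (kR i) \<and> d (i-1) * Y (i-1) = X i * G)"
definition G' where "G' i = (SOME G. G \<in> carrier_mat (kR i) (kB (i-1)) \<and> \<delta> i * X i = Y (i-1) * G)"
definition Bb where "Bb i = (SOME W. W \<in> carrier_mat (kR (i+1)) (kB i) \<and>
   (\<exists>U\<in>carrier_mat (kB (i-1)) (kB i). B i = X i * U + Y i * W))"
definition Ga where "Ga i = (SOME \<Gamma>. \<Gamma> \<in> carrier_mat (kB (i-1)) (kR i) \<and>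
   (\<exists>V\<in>carrier_mat (kR (i+1)) (kR i). R i = X i * \<Gamma> + Y i * V))"

lemma G: "G i \<in> carrier_mat (kB (i-1)) (kR i)" "d (i-1) * Y (i-1) = X i * G i"
proof -
  have "G i \<in> carrier_mat (kB (i-1)) (kR i) \<and> d (i-1) * Y (i-1) = X i * G i"
    unfolding G_def by (rule someI_ex) (use Gex[of i] in blast)
  thus "G i \<in> carrier_mat (kB (i-1)) (kR i)" "d (i-1) * Y (i-1) = X i * G i" by auto
qed

lemma G': "G' i \<in> carrier_mat (kR i) (kB (i-1))" "\<delta> i * X i = Y (i-1) * G' i"
proof -
  have "G' i \<in> carrier_mat (kR i) (kB (i-1)) \<and> \<delta> i * X i = Y (i-1) * G' i"
    unfolding G'_def by (rule someI_ex) (use G'ex[of i] in blast)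
  thus "G' i \<in> carrier_mat (kR i) (kB (i-1))" "\<delta> i * X i = Y (i-1) * G' i" by auto
qed

lemma Bb: "Bb i \<in> carrier_mat (kR (i+1)) (kB i)"
  "\<exists>U\<in>carrier_mat (kB (i-1)) (kB i). B i = X i * U + Y i * Bb i"
proof -
  have "Bb i \<in> carrier_mat (kR (i+1)) (kB i) \<and> (\<exists>U\<in>carrier_mat (kB (i-1)) (kB i). B i = X i * U + Y i * Bb i)"
    unfolding Bb_def by (rule someI_ex) (use Bdec[of i] in blast)
  thus "Bb i \<in> carrier_mat (kR (i+1)) (kB i)" "\<exists>U\<in>carrier_mat (kB (i-1)) (kB i). B i = X i * U + Y i * Bb i"
    by auto
qed

lemma Ga: "Ga i \<in> carrier_mat (kB (i-1)) (kR i)"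
  "\<exists>V\<in>carrier_mat (kR (i+1)) (kR i). R i = X i * Ga i + Y i * V"
proof -
  have "Ga i \<in> carrier_mat (kB (i-1)) (kR i) \<and> (\<exists>V\<in>carrier_mat (kR (i+1)) (kR i). R i = X i * Ga i + Y i * V)"
    unfolding Ga_def by (rule someI_ex) (use Rdec[of i] in blast)
  thus "Ga i \<in> carrier_mat (kB (i-1)) (kR i)" "\<exists>V\<in>carrier_mat (kR (i+1)) (kR i). R i = X i * Ga i + Y i * V"
    by auto
qed

end

context cx begin

lemma Xm: "X (i-1) = d (i-1-1) * B (i-1-1)" by (simp add: X_def)
lemma Ym: "Y (i-1) = \<delta> i * R i" by (simp add: Y_def)
lemma Xp: "X (i+1) = d i * B i" by (simp add: X_def)

lemma dX: "d i * X i = 0\<^sub>m (n (i+1)) (kB (i-1))"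
proof -
  have "d i * X i = (d i * d (i-1)) * B (i-1)" unfolding X_def
    by (rule assoc_mult_mat[OF dc dc' Bc', symmetric])
  also have "\<dots> = 0\<^sub>m (n (i+1)) (kB (i-1))" unfolding ddm by (rule left_mult_zero_mat[OF Bc'])
  finally show ?thesis .
qed

lemma \<delta>Y: "\<delta> i * Y i = 0\<^sub>m (n (i-1)) (kR (i+1))"
proof -
  have "\<delta> i * Y i = (\<delta> i * \<delta> (i+1)) * R (i+1)" unfolding Y_def
    by (rule assoc_mult_mat[OF ec ec' Rc', symmetric])
  also have "\<dots> = 0\<^sub>m (n (i-1)) (kR (i+1))" unfolding \<delta>\<delta>m by (rule left_mult_zero_mat[OF Rc'])
  finally show ?thesis .
qed

lemma GBb: "G i * Bb (i-1) = 1\<^sub>m (kB (i-1))"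
proof -
  have Bb': "Bb (i-1) \<in> carrier_mat (kR i) (kB (i-1))" using Bb(1)[of "i-1"] by simp
  obtain U where U: "U \<in> carrier_mat (kB (i-1-1)) (kB (i-1))"
    and BU: "B (i-1) = X (i-1) * U + Y (i-1) * Bb (i-1)" using Bb(2)[of "i-1"] by blast
  have X': "X (i-1) \<in> carrier_mat (n (i-1)) (kB (i-1-1))" by (rule Xc)
  have Y': "Y (i-1) \<in> carrier_mat (n (i-1)) (kR i)" using Yc[of "i-1"] by simp
  have dX': "d (i-1) * X (i-1) = 0\<^sub>m (n i) (kB (i-1-1))" using dX[of "i-1"] by simp
  note Gi = G[of i]
  have "X i = d (i-1) * B (i-1)" by (simp add: X_def)
  also have "\<dots> = d (i-1) * (X (i-1) * U) + d (i-1) * (Y (i-1) * Bb (i-1))"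
    unfolding BU by (rule mult_add_distrib_mat[OF dc' mult_carrier_mat[OF X' U] mult_carrier_mat[OF Y' Bb']])
  also have "d (i-1) * (X (i-1) * U) = 0\<^sub>m (n i) (kB (i-1))"
    using assoc_mult_mat[OF dc' X' U, symmetric] dX' left_mult_zero_mat[OF U] by simp
  also have "d (i-1) * (Y (i-1) * Bb (i-1)) = X i * (G i * Bb (i-1))"
    using assoc_mult_mat[OF dc' Y' Bb', symmetric] Gi(2) assoc_mult_mat[OF Xc Gi(1) Bb'] by simp
  also have "0\<^sub>m (n i) (kB (i-1)) + X i * (G i * Bb (i-1)) = X i * (G i * Bb (i-1))"
    by (rule left_add_zero_mat[OF mult_carrier_mat[OF Xc mult_carrier_mat[OF Gi(1) Bb']]])
  finally have "X i * 1\<^sub>m (kB (i-1)) = X i * (G i * Bb (i-1))"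
    by (subst right_mult_one_mat[OF Xc[of i]])
  thus ?thesis
    by (intro inj_cancel[OF Xc one_carrier_mat mult_carrier_mat[OF Gi(1) Bb'] X_inj, symmetric])
qed

lemma G'Ga: "G' i * Ga i = 1\<^sub>m (kR i)"
proof -
  obtain V where V: "V \<in> carrier_mat (kR (i+1)) (kR i)"
    and RV: "R i = X i * Ga i + Y i * V" using Ga(2)[of i] by blast
  have Y': "Y (i-1) \<in> carrier_mat (n (i-1)) (kR i)" using Yc[of "i-1"] by simp
  note Gi = G'[of i] and Gai = Ga(1)[of i]
  have "Y (i-1) = \<delta> i * R i" by (rule Ym)
  also have "\<dots> = \<delta> i * (X i * Ga i) + \<delta> i * (Y i * V)"
    unfolding RV by (rule mult_add_distrib_mat[OF ec mult_carrier_mat[OF Xc Gai] mult_carrier_mat[OF Yc V]])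
  also have "\<delta> i * (Y i * V) = 0\<^sub>m (n (i-1)) (kR i)"
    using assoc_mult_mat[OF ec Yc V, symmetric] \<delta>Y[of i] left_mult_zero_mat[OF V] by simp
  also have "\<delta> i * (X i * Ga i) = Y (i-1) * (G' i * Ga i)"
    using assoc_mult_mat[OF ec Xc Gai, symmetric] Gi(2) assoc_mult_mat[OF Y' Gi(1) Gai] by simp
  also have "Y (i-1) * (G' i * Ga i) + 0\<^sub>m (n (i-1)) (kR i) = Y (i-1) * (G' i * Ga i)"
    by (rule right_add_zero_mat[OF mult_carrier_mat[OF Y' mult_carrier_mat[OF Gi(1) Gai]]])
  finally have "Y (i-1) * 1\<^sub>m (kR i) = Y (i-1) * (G' i * Ga i)"
    by (subst right_mult_one_mat[OF Y'])
  moreover have "\<And>v. v \<in> carrier_vec (kR i) \<Longrightarrow> Y (i-1) *\<^sub>v v = 0\<^sub>v (n (i-1)) \<Longrightarrow> v = 0\<^sub>v (kR i)"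
    using Y_inj[of _ "i-1"] by simp
  ultimately show ?thesis
    by (intro inj_cancel[OF Y' one_carrier_mat mult_carrier_mat[OF Gi(1) Gai], symmetric])
qed

lemma hX: "h i * X i = X i * (G i * G' i)"
proof -
  note Gi = G[of i] and G'i = G'[of i]
  have Y': "Y (i-1) \<in> carrier_mat (n (i-1)) (kR i)" using Yc[of "i-1"] by simp
  have "h i * X i = (d (i-1) * \<delta> i) * X i + (\<delta> (i+1) * d i) * X i"
    unfolding comm_dd_def by (rule add_mult_distrib_mat[OF mult_carrier_mat[OF dc' ec] mult_carrier_mat[OF ec' dc] Xc])
  also have "(\<delta> (i+1) * d i) * X i = 0\<^sub>m (n i) (kB (i-1))"
    using assoc_mult_mat[OF ec' dc Xc] dX[of i] right_mult_zero_mat[OF ec'] by simp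
  also have "(d (i-1) * \<delta> i) * X i = X i * (G i * G' i)"
  proof -
    have "(d (i-1) * \<delta> i) * X i = d (i-1) * (Y (i-1) * G' i)"
      using assoc_mult_mat[OF dc' ec Xc] G'i(2) by simp
    also have "\<dots> = (X i * G i) * G' i" using assoc_mult_mat[OF dc' Y' G'i(1), symmetric] Gi(2) by simp
    also have "\<dots> = X i * (G i * G' i)" by (rule assoc_mult_mat[OF Xc Gi(1) G'i(1)])
    finally show ?thesis .
  qed
  also have "X i * (G i * G' i) + 0\<^sub>m (n i) (kB (i-1)) = X i * (G i * G' i)"
    by (rule right_add_zero_mat[OF mult_carrier_mat[OF Xc mult_carrier_mat[OF Gi(1) G'i(1)]]])
  finally show ?thesis .
qed

lemma hY: "h i * Y i = Y i * (G' (i+1) * G (i+1))"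
proof -
  have G1: "G (i+1) \<in> carrier_mat (kB i) (kR (i+1))" and G1e: "d i * Y i = X (i+1) * G (i+1)"
    using G[of "i+1"] by simp_all
  have G'1: "G' (i+1) \<in> carrier_mat (kR (i+1)) (kB i)" and G'1e: "\<delta> (i+1) * X (i+1) = Y i * G' (i+1)"
    using G'[of "i+1"] by simp_all
  have X1: "X (i+1) \<in> carrier_mat (n (i+1)) (kB i)" using Xc[of "i+1"] by simp
  have "h i * Y i = (d (i-1) * \<delta> i) * Y i + (\<delta> (i+1) * d i) * Y i"
    unfolding comm_dd_def by (rule add_mult_distrib_mat[OF mult_carrier_mat[OF dc' ec] mult_carrier_mat[OF ec' dc] Yc])
  also have "(d (i-1) * \<delta> i) * Y i = 0\<^sub>m (n i) (kR (i+1))"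
    using assoc_mult_mat[OF dc' ec Yc] \<delta>Y[of i] right_mult_zero_mat[OF dc'] by simp
  also have "(\<delta> (i+1) * d i) * Y i = Y i * (G' (i+1) * G (i+1))"
  proof -
    have "(\<delta> (i+1) * d i) * Y i = \<delta> (i+1) * (X (i+1) * G (i+1))"
      using assoc_mult_mat[OF ec' dc Yc] G1e by simp
    also have "\<dots> = (Y i * G' (i+1)) * G (i+1)" using assoc_mult_mat[OF ec' X1 G1, symmetric] G'1e by simp
    also have "\<dots> = Y i * (G' (i+1) * G (i+1))" by (rule assoc_mult_mat[OF Yc G'1 G1])
    finally show ?thesis .
  qed
  also have "0\<^sub>m (n i) (kR (i+1)) + Y i * (G' (i+1) * G (i+1)) = Y i * (G' (i+1) * G (i+1))"
    by (rule left_add_zero_mat[OF mult_carrier_mat[OF Yc mult_carrier_mat[OF G'1 G1]]])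
  finally show ?thesis .
qed

end

context cx begin

lemma Ec: "E i \<in> carrier_mat (n i) (n i)"
  using cat_cols_carrier[OF Xc Yc, of i] E_props(1)[of i] unfolding E_def by simp

lemma det_h: "det (h i) = det (G i) * det (G' i) * (det (G' (i+1)) * det (G (i+1)))"
proof -
  have kk: "kR i = kB (i-1)" using kBR[of i] by simp
  have kk2: "kB i = kR (i+1)" using kRB[of i] by simp
  have Gs: "G i \<in> carrier_mat (kB (i-1)) (kB (i-1))" using G(1)[of i] kk by simp
  have G's: "G' i \<in> carrier_mat (kB (i-1)) (kB (i-1))" using G'(1)[of i] kk by simp
  have G1s: "G (i+1) \<in> carrier_mat (kR (i+1)) (kR (i+1))" using G(1)[of "i+1"] kk2 by simp
  have G'1s: "G' (i+1) \<in> carrier_mat (kR (i+1)) (kR (i+1))" using G'(1)[of "i+1"] kk2 by simp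
  have GG: "G i * G' i \<in> carrier_mat (kB (i-1)) (kB (i-1))" by (rule mult_carrier_mat[OF Gs G's])
  have GG1: "G' (i+1) * G (i+1) \<in> carrier_mat (kR (i+1)) (kR (i+1))" by (rule mult_carrier_mat[OF G'1s G1s])
  define F where "F = four_block_mat (G i * G' i) (0\<^sub>m (kB (i-1)) (kR (i+1))) (0\<^sub>m (kR (i+1)) (kB (i-1))) (G' (i+1) * G (i+1))"
  have Fc: "F \<in> carrier_mat (n i) (n i)"
    using four_block_carrier_mat[OF GG GG1] E_props(1)[of i] unfolding F_def by simp
  have z1: "0\<^sub>m (kB (i-1)) (kR (i+1)) \<in> carrier_mat (kB (i-1)) (kR (i+1))" by simp
  have z2: "0\<^sub>m (kR (i+1)) (kB (i-1)) \<in> carrier_mat (kR (i+1)) (kB (i-1))" by simp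
  have XG: "X i * (G i * G' i) \<in> carrier_mat (n i) (kB (i-1))" by (rule mult_carrier_mat[OF Xc GG])
  have YG: "Y i * (G' (i+1) * G (i+1)) \<in> carrier_mat (n i) (kR (i+1))" by (rule mult_carrier_mat[OF Yc GG1])
  have "E i * F = cat_cols (n i) (X i * (G i * G' i) + Y i * 0\<^sub>m (kR (i+1)) (kB (i-1)))
        (X i * 0\<^sub>m (kB (i-1)) (kR (i+1)) + Y i * (G' (i+1) * G (i+1)))"
    unfolding E_def F_def by (rule cat_mult_four[OF Xc Yc GG z1 z2 GG1])
  also have "Y i * 0\<^sub>m (kR (i+1)) (kB (i-1)) = 0\<^sub>m (n i) (kB (i-1))" by (rule right_mult_zero_mat[OF Yc])
  also have "X i * 0\<^sub>m (kB (i-1)) (kR (i+1)) = 0\<^sub>m (n i) (kR (i+1))" by (rule right_mult_zero_mat[OF Xc])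
  also have "X i * (G i * G' i) + 0\<^sub>m (n i) (kB (i-1)) = X i * (G i * G' i)" by (rule right_add_zero_mat[OF XG])
  also have "0\<^sub>m (n i) (kR (i+1)) + Y i * (G' (i+1) * G (i+1)) = Y i * (G' (i+1) * G (i+1))" by (rule left_add_zero_mat[OF YG])
  also have "cat_cols (n i) (X i * (G i * G' i)) (Y i * (G' (i+1) * G (i+1))) = cat_cols (n i) (h i * X i) (h i * Y i)"
    unfolding hX hY ..
  also have "\<dots> = h i * E i" unfolding E_def by (rule mult_cat[OF hc Xc Yc, symmetric])
  finally have eq: "h i * E i = E i * F" by simp
  have "det (h i) * det (E i) = det (h i * E i)" by (rule det_mult[OF hc[of i] Ec[of i], symmetric])
  also have "\<dots> = det (E i * F)" unfolding eq ..
  also have "\<dots> = det (E i) * det F" by (rule det_mult[OF Ec[of i] Fc])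
  finally have "det (h i) * det (E i) = det (E i) * det F" .
  moreover have "det F = det (G i * G' i) * det (G' (i+1) * G (i+1))"
    unfolding F_def by (rule det_four_block_mat_upper_right_zero[OF GG refl z2 GG1])
  moreover have "det (G i * G' i) = det (G i) * det (G' i)" by (rule det_mult[OF Gs G's])
  moreover have "det (G' (i+1) * G (i+1)) = det (G' (i+1)) * det (G (i+1))" by (rule det_mult[OF G'1s G1s])
  ultimately show ?thesis using E_props(2)[of i] by (simp add: mult.commute)
qed

lemma det_GBb: "det (G i) * det (Bb (i-1)) = 1"
proof -
  have kk: "kR i = kB (i-1)" using kBR[of i] by simp
  have Gs: "G i \<in> carrier_mat (kB (i-1)) (kB (i-1))" using G(1)[of i] kk by simp
  have Bs: "Bb (i-1) \<in> carrier_mat (kB (i-1)) (kB (i-1))" using Bb(1)[of "i-1"] kk by simp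
  show ?thesis using det_mult[OF Gs Bs] GBb[of i] by simp
qed

lemma det_G'Ga: "det (G' i) * det (Ga i) = 1"
proof -
  have kk: "kB (i-1) = kR i" using kBR[of i] by simp
  have Gs: "G' i \<in> carrier_mat (kR i) (kR i)" using G'(1)[of i] kk by simp
  have Gas: "Ga i \<in> carrier_mat (kR i) (kR i)" using Ga(1)[of i] kk by simp
  show ?thesis using det_mult[OF Gs Gas] G'Ga[of i] by simp
qed

lemma detP: "det (P i) = det (E i) * det (Bb i)"
proof -
  have kk2: "kB i = kR (i+1)" using kRB[of i] by simp
  obtain U where U0: "U \<in> carrier_mat (kB (i-1)) (kB i)" and BU: "B i = X i * U + Y i * Bb i"
    using Bb(2)[of i] by blast
  have U: "U \<in> carrier_mat (kB (i-1)) (kR (i+1))" using U0 kk2 by simp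
  have Bbs: "Bb i \<in> carrier_mat (kR (i+1)) (kR (i+1))" using Bb(1)[of i] kk2 by simp
  have o: "1\<^sub>m (kB (i-1)) \<in> carrier_mat (kB (i-1)) (kB (i-1))" by simp
  have z2: "0\<^sub>m (kR (i+1)) (kB (i-1)) \<in> carrier_mat (kR (i+1)) (kB (i-1))" by simp
  define F where "F = four_block_mat (1\<^sub>m (kB (i-1))) U (0\<^sub>m (kR (i+1)) (kB (i-1))) (Bb i)"
  have Fc: "F \<in> carrier_mat (n i) (n i)"
    using four_block_carrier_mat[OF o Bbs] E_props(1)[of i] unfolding F_def by simp
  have "E i * F = cat_cols (n i) (X i * 1\<^sub>m (kB (i-1)) + Y i * 0\<^sub>m (kR (i+1)) (kB (i-1))) (X i * U + Y i * Bb i)"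
    unfolding E_def F_def by (rule cat_mult_four[OF Xc Yc o U z2 Bbs])
  also have "X i * 1\<^sub>m (kB (i-1)) + Y i * 0\<^sub>m (kR (i+1)) (kB (i-1)) = X i"
    using right_mult_one_mat[OF Xc[of i]] right_mult_zero_mat[OF Yc[of i]] right_add_zero_mat[OF Xc[of i]] by simp
  also have "cat_cols (n i) (X i) (X i * U + Y i * Bb i) = P i" unfolding P_def BU ..
  finally have eq: "P i = E i * F" by simp
  have "det F = det (1\<^sub>m (kB (i-1))) * det (Bb i)"
    unfolding F_def by (rule det_four_block_mat_lower_left_zero[OF o U refl Bbs])
  thus ?thesis using det_mult[OF Ec[of i] Fc] eq by simp
qed

lemma detQ: "det (Q i) = det (E i) * det (Ga i)"
proof -
  have kk: "kR i = kB (i-1)" using kBR[of i] by simp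
  obtain V where V0: "V \<in> carrier_mat (kR (i+1)) (kR i)" and RV: "R i = X i * Ga i + Y i * V"
    using Ga(2)[of i] by blast
  have V: "V \<in> carrier_mat (kR (i+1)) (kB (i-1))" using V0 kk by simp
  have Gas: "Ga i \<in> carrier_mat (kB (i-1)) (kB (i-1))" using Ga(1)[of i] kk by simp
  have o: "1\<^sub>m (kR (i+1)) \<in> carrier_mat (kR (i+1)) (kR (i+1))" by simp
  have z1: "0\<^sub>m (kB (i-1)) (kR (i+1)) \<in> carrier_mat (kB (i-1)) (kR (i+1))" by simp
  define F where "F = four_block_mat (Ga i) (0\<^sub>m (kB (i-1)) (kR (i+1))) V (1\<^sub>m (kR (i+1)))"
  have Fc: "F \<in> carrier_mat (n i) (n i)"
    using four_block_carrier_mat[OF Gas o] E_props(1)[of i] unfolding F_def by simp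
  have "E i * F = cat_cols (n i) (X i * Ga i + Y i * V) (X i * 0\<^sub>m (kB (i-1)) (kR (i+1)) + Y i * 1\<^sub>m (kR (i+1)))"
    unfolding E_def F_def by (rule cat_mult_four[OF Xc Yc Gas z1 V o])
  also have "X i * 0\<^sub>m (kB (i-1)) (kR (i+1)) + Y i * 1\<^sub>m (kR (i+1)) = Y i"
    using right_mult_one_mat[OF Yc[of i]] right_mult_zero_mat[OF Xc[of i]] left_add_zero_mat[OF Yc[of i]] by simp
  also have "cat_cols (n i) (X i * Ga i + Y i * V) (Y i) = Q i" unfolding Q_def RV ..
  finally have eq: "Q i = E i * F" by simp
  have "det F = det (Ga i) * det (1\<^sub>m (kR (i+1)))"
    unfolding F_def by (rule det_four_block_mat_upper_right_zero[OF Gas refl V o])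
  thus ?thesis using det_mult[OF Ec[of i] Fc] eq by simp
qed

lemma kzero: "i \<notin> {p..q} \<Longrightarrow> kB (i-1) = 0 \<and> kB i = 0 \<and> kR i = 0 \<and> kR (i+1) = 0"
  using n_out[of i] P_props(1)[of i] Q_props(1)[of i] by simp

lemma boundary: "det (Bb (p-1)) = 1" "det (Bb q) = 1" "det (Ga p) = 1" "det (Ga (q+1)) = 1"
proof -
  have a: "kB (p-1) = 0" "kR (p-1+1) = 0" using kzero[of "p-1"] by auto
  show "det (Bb (p-1)) = 1" by (rule det_0x0) (use Bb(1)[of "p-1"] a in simp)
  have b: "kB (q+1-1) = 0" "kR (q+1) = 0" using kzero[of "q+1"] by auto
  show "det (Bb q) = 1" by (rule det_0x0) (use Bb(1)[of q] b in simp)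
  show "det (Ga p) = 1" by (rule det_0x0) (use Ga(1)[of p] a in simp)
  show "det (Ga (q+1)) = 1" by (rule det_0x0) (use Ga(1)[of "q+1"] b in simp)
qed

lemma main:
  shows "(\<Prod>i\<in>{p..q}. det (comm_dd d \<delta> i) powi sgnexp i) = 1
       \<and> tau_d n d B p q / tau_delta n \<delta> R p q
           = (\<Prod>i\<in>{p..q}. det (comm_dd d \<delta> i) powi (sgnexp i * i))
       \<and> ((\<forall>i. comm_dd d \<delta> i = 1\<^sub>m (n i)) \<longrightarrow> tau_d n d B p q = tau_delta n \<delta> R p q)"
proof -
  note fa = final_algebra[of "\<lambda>i. det (G i)" "\<lambda>i. det (Bb i)" "\<lambda>i. det (G' i)" "\<lambda>i. det (Ga i)"
      "\<lambda>i. det (h i)" "\<lambda>i. det (E i)" p q, OF det_GBb det_G'Ga det_h E_props(2) boundary]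
  have td: "tau_d n d B p q = (\<Prod>i\<in>{p..q}. (det (E i) * det (Bb i)) powi sgnexp i)"
    unfolding tau_d_def by (rule prod.cong[OF refl]) (simp add: detP[symmetric] P_def X_def)
  have te: "tau_delta n \<delta> R p q = (\<Prod>i\<in>{p..q}. (det (E i) * det (Ga i)) powi sgnexp i)"
    unfolding tau_delta_def by (rule prod.cong[OF refl]) (simp add: detQ[symmetric] Q_def Y_def)
  have tnz: "tau_delta n \<delta> R p q \<noteq> 0"
    unfolding tau_delta_def using Q_props(2) by (simp add: prod_zero_iff power_int_not_zero Q_def Y_def)
  have r2: "tau_d n d B p q / tau_delta n \<delta> R p q = (\<Prod>i\<in>{p..q}. det (comm_dd d \<delta> i) powi (sgnexp i * i))"
    unfolding td te by (rule fa(2))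
  have r3: "tau_d n d B p q = tau_delta n \<delta> R p q" if one: "\<forall>i. comm_dd d \<delta> i = 1\<^sub>m (n i)"
  proof -
    have "(\<Prod>i\<in>{p..q}. det (comm_dd d \<delta> i) powi (sgnexp i * i)) = 1" using one by simp
    with r2 tnz show ?thesis by simp
  qed
  show ?thesis using fa(1) r2 r3 by blast
qed

end

theorem mainTheorem16:
  fixes n :: "int \<Rightarrow> nat" and p q :: int
    and d \<delta> :: "int \<Rightarrow> complex mat"
    and B R :: "int \<Rightarrow> complex mat"
  assumes n_out: "\<And>i. i \<notin> {p..q} \<Longrightarrow> n i = 0"
    and d_dim: "\<And>i. d i \<in> carrier_mat (n (i+1)) (n i)"
    and \<delta>_dim: "\<And>i. \<delta> i \<in> carrier_mat (n (i-1)) (n i)"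
    and dd: "\<And>i. d (i+1) * d i = 0\<^sub>m (n (i+2)) (n i)"
    and \<delta>\<delta>: "\<And>i. \<delta> (i-1) * \<delta> i = 0\<^sub>m (n (i-2)) (n i)"
    and inv: "\<And>i. det (comm_dd d \<delta> i) \<noteq> 0"
    and B: "\<And>i. is_compl_basis (d (i-1)) (B i) (n i)"
    and R: "\<And>i. is_compl_basis (\<delta> (i+1)) (R i) (n i)"
  shows "(\<Prod>i\<in>{p..q}. det (comm_dd d \<delta> i) powi sgnexp i) = 1
       \<and> tau_d n d B p q / tau_delta n \<delta> R p q
           = (\<Prod>i\<in>{p..q}. det (comm_dd d \<delta> i) powi (sgnexp i * i))
       \<and> ((\<forall>i. comm_dd d \<delta> i = 1\<^sub>m (n i)) \<longrightarrow> tau_d n d B p q = tau_delta n \<delta> R p q)"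
proof -
  interpret cx n p q d \<delta> B R
    by (unfold_locales) (fact n_out d_dim \<delta>_dim dd \<delta>\<delta> inv B R)+
  show ?thesis by (rule main)
qed


end
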